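(* Let $\Omega\subset\mathbb{R}^n$ be a bounded, connected open set, let $\varphi\in\Phi_w(\Omega)$ and let $u\in LD_{\rm loc}(\Omega)$. Then $$\widetilde{V}^{n\times n}_\varphi(Eu)\le\|\mathcal{E}u\|_{(L^{\varphi^*}(\Omega;\mathbb{R}^{n\times n}))'}.$$ If moreover $C^1_c(\Omega;\mathbb{R}^{n\times n})$ is dense in $L^{\varphi^*}(\Omega;\mathbb{R}^{n\times n})$, then $\widetilde{V}^{n\times n}_\varphi(Eu)=\|\mathcal{E}u\|_{(L^{\varphi^*}(\Omega;\mathbb{R}^{n\times n}))'}$.
   Context: A weak $\Phi$-function on $\Omega$ ($\varphi\in\Phi_w(\Omega)$) is a function $\varphi:\Omega\times[0,\infty)\to[0,\infty]$ such that: $x\mapsto\varphi(x,|f(x)|)$ is measurable for every measurable $f$; $t\mapsto\varphi(x,t)$ is non-decreasing for every $x$; $\varphi(x,0)=\lim_{t\to0^+}\varphi(x,t)=0$ and $\lim_{t\to\infty}\varphi(x,t)=\infty$ for every $x$; there is $L\ge1$ independent of $x$ with $\varphi(x,s)/s\le L\,\varphi(x,t)/t$ for $0<s\le t$. The conjugate is $\varphi^*(x,t)=\sup_{s\ge0}(st-\varphi(x,s))$; $\|f\|_{\varphi^*}=\inf\{\lambda>0:\int_\Omega\varphi^*(x,|f|/\lambda)dx\le1\}$ for measurable $f$ (with $|\cdot|$ the Frobenius norm for matrices), and $L^{\varphi^*}(\Omega;\mathbb{R}^{n\times n})$ is the space of measurable matrix fields with finite $\|\cdot\|_{\varphi^*}$.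 $LD_{\rm loc}(\Omega)=\{u\in L^1_{\rm loc}(\Omega;\mathbb{R}^n): Eu\in L^1_{\rm loc}(\Omega;\mathbb{R}^{n\times n}_{\rm sym})\}$, where $Eu=\frac12(Du+Du^T)$ is the distributional symmetric gradient, and $\mathcal{E}u$ denotes its density (so $Eu=\mathcal{E}u\,\mathcal{L}^n$). For a matrix field $g$, the associate norm is $\|g\|_{(L^{\varphi^*}(\Omega;\mathbb{R}^{n\times n}))'}=\sup\{\int_\Omega|g|\,v\,dx: v\text{ measurable},\ \|v\|_{\varphi^*}\le1\}$. For $v\in\mathcal{M}(\Omega;\mathbb{R}^{n\times n}_{\rm sym})$ (or $v\in L^1_{\rm loc}$ viewed as a measure), $\widetilde{V}^{n\times n}_\varphi(v)=\sup\{\int_\Omega\psi:dv:\psi\in C^1_c(\Omega;\mathbb{R}^{n\times n}_{\rm sym}),\|\psi\|_{\varphi^*}\le1\}$, $A:B=\mathrm{tr}(AB^T)$. *)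

theory Defs
  imports "HOL-Analysis.Analysis"
begin

text \<open>C^k on the whole space (functions on Omega are extended by zero outside
  their compact support in Omega): C^0 = continuous; C^(k+1) = differentiable
  everywhere and every directional (partial) derivative is C^k.\<close>
fun Ck :: "nat \<Rightarrow> (real^'n \<Rightarrow> 'b::real_normed_vector) \<Rightarrow> bool" where
  "Ck 0 f = continuous_on UNIV f"
| "Ck (Suc k) f = ((\<forall>x. f differentiable (at x)) \<and>
      (\<forall>v. Ck k (\<lambda>x. frechet_derivative f (at x) v)))"

definition support_in :: "(real^'n \<Rightarrow> 'b::real_normed_vector) \<Rightarrow> (real^'n) set \<Rightarrow> bool" where
  "support_in f \<Omega> \<longleftrightarrow> compact (closure {x. f x \<noteq> 0}) \<and> closure {x. f x \<noteq> 0} \<subseteq> \<Omega>"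

definition C1c :: "(real^'n) set \<Rightarrow> (real^'n \<Rightarrow> real^'n^'n) set" where
  "C1c \<Omega> = {\<psi>. Ck 1 \<psi> \<and> support_in \<psi> \<Omega>}"

definition Cinfc :: "(real^'n) set \<Rightarrow> (real^'n \<Rightarrow> real^'n^'n) set" where
  "Cinfc \<Omega> = {\<psi>. (\<forall>k. Ck k \<psi>) \<and> support_in \<psi> \<Omega>}"

definition sym_field :: "(real^'n \<Rightarrow> real^'n^'n) \<Rightarrow> bool" where
  "sym_field \<psi> \<longleftrightarrow> (\<forall>x i j. \<psi> x $ i $ j = \<psi> x $ j $ i)"

definition frob :: "real^'n^'n \<Rightarrow> real^'n^'n \<Rightarrow> real" (infixl "\<bar>:\<bar>" 70) where
  "A \<bar>:\<bar> B = (\<Sum>i\<in>UNIV. \<Sum>j\<in>UNIV. A $ i $ j * B $ i $ j)"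

definition weak_Phi :: "(real^'n) set \<Rightarrow> (real^'n \<Rightarrow> real \<Rightarrow> ennreal) \<Rightarrow> bool" where
  "weak_Phi \<Omega> \<phi> \<longleftrightarrow>
     (\<forall>f. f \<in> borel_measurable (lebesgue_on \<Omega>) \<longrightarrow>
          (\<lambda>x. \<phi> x \<bar>f x\<bar>) \<in> borel_measurable (lebesgue_on \<Omega>)) \<and>
     (\<forall>x\<in>\<Omega>. mono_on {0..} (\<phi> x)) \<and>
     (\<forall>x\<in>\<Omega>. \<phi> x 0 = 0 \<and> ((\<phi> x) \<longlongrightarrow> 0) (at_right 0)) \<and>
     (\<forall>x\<in>\<Omega>. ((\<phi> x) \<longlongrightarrow> \<infinity>) at_top) \<and>
     (\<exists>L\<ge>1. \<forall>x\<in>\<Omega>. \<forall>s t. 0 < s \<and> s \<le> t \<longrightarrow>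
          \<phi> x s / ennreal s \<le> ennreal L * (\<phi> x t / ennreal t))"

text \<open>phi*(x,t) = sup_{s>=0} (s t - phi(x,s)); the supremum is >= 0 (s = 0), so
  truncated subtraction in ennreal gives the same value.\<close>
definition conj_Phi :: "(real^'n \<Rightarrow> real \<Rightarrow> ennreal) \<Rightarrow> real^'n \<Rightarrow> real \<Rightarrow> ennreal" where
  "conj_Phi \<phi> x t = (SUP s\<in>{0..}. ennreal (s * t) - \<phi> x s)"

text \<open>Luxemburg (quasi)norm of a scalar function h with respect to Psi on Omega
  (value \<infinity> if the defining set is empty).\<close>
definition lux :: "(real^'n) set \<Rightarrow> (real^'n \<Rightarrow> real \<Rightarrow> ennreal) \<Rightarrow> (real^'n \<Rightarrow> real) \<Rightarrow> ennreal" where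
  "lux \<Omega> \<Psi> h = Inf {ennreal r | r. r > 0 \<and>
        (\<integral>\<^sup>+ x\<in>\<Omega>. \<Psi> x (\<bar>h x\<bar> / r) \<partial>lebesgue) \<le> 1}"

text \<open>Norm of a matrix field in L^{phi*}: Frobenius norm pointwise (the norm on
  real^'n^'n is the Frobenius norm).\<close>
definition mnorm_conj :: "(real^'n) set \<Rightarrow> (real^'n \<Rightarrow> real \<Rightarrow> ennreal) \<Rightarrow> (real^'n \<Rightarrow> real^'n^'n) \<Rightarrow> ennreal" where
  "mnorm_conj \<Omega> \<phi> f = lux \<Omega> (conj_Phi \<phi>) (\<lambda>x. norm (f x))"

definition L_conj :: "(real^'n) set \<Rightarrow> (real^'n \<Rightarrow> real \<Rightarrow> ennreal) \<Rightarrow> (real^'n \<Rightarrow> real^'n^'n) set" where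
  "L_conj \<Omega> \<phi> = {f. f \<in> borel_measurable (lebesgue_on \<Omega>) \<and> mnorm_conj \<Omega> \<phi> f < \<infinity>}"

definition assoc_norm :: "(real^'n) set \<Rightarrow> (real^'n \<Rightarrow> real \<Rightarrow> ennreal) \<Rightarrow> (real^'n \<Rightarrow> real^'n^'n) \<Rightarrow> ennreal" where
  "assoc_norm \<Omega> \<phi> g = (SUP v \<in> {v. v \<in> borel_measurable (lebesgue_on \<Omega>) \<and>
        lux \<Omega> (conj_Phi \<phi>) v \<le> 1}.
        \<integral>\<^sup>+ x\<in>\<Omega>. ennreal (norm (g x) * \<bar>v x\<bar>) \<partial>lebesgue)"

definition loc_integrable :: "(real^'n) set \<Rightarrow> (real^'n \<Rightarrow> 'b::{banach,second_countable_topology}) \<Rightarrow> bool" where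
  "loc_integrable \<Omega> f \<longleftrightarrow> f \<in> borel_measurable (lebesgue_on \<Omega>) \<and>
     (\<forall>K. compact K \<and> K \<subseteq> \<Omega> \<longrightarrow> integrable (lebesgue_on K) f)"

definition mat_div :: "(real^'n \<Rightarrow> real^'n^'n) \<Rightarrow> real^'n \<Rightarrow> real^'n" where
  "mat_div \<psi> x = (\<chi> i. \<Sum>j\<in>UNIV. frechet_derivative \<psi> (at x) (axis j 1) $ i $ j)"

text \<open>w is the density of the distributional symmetric gradient Eu of u on Omega:
  w is a locally integrable symmetric-matrix field and
  <Eu, psi> = - int u . div psi  for all symmetric psi in C^infinity_c.\<close>
definition sym_grad_density :: "(real^'n) set \<Rightarrow> (real^'n \<Rightarrow> real^'n) \<Rightarrow> (real^'n \<Rightarrow> real^'n^'n) \<Rightarrow> bool" where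
  "sym_grad_density \<Omega> u w \<longleftrightarrow> loc_integrable \<Omega> w \<and> (\<forall>x\<in>\<Omega>. \<forall>i j. w x $ i $ j = w x $ j $ i) \<and>
     (\<forall>\<psi>\<in>Cinfc \<Omega>. sym_field \<psi> \<longrightarrow>
        (\<integral>x. \<psi> x \<bar>:\<bar> w x \<partial>lebesgue_on \<Omega>) = - (\<integral>x. u x \<bullet> mat_div \<psi> x \<partial>lebesgue_on \<Omega>))"

definition LD_loc :: "(real^'n) set \<Rightarrow> (real^'n \<Rightarrow> real^'n) set" where
  "LD_loc \<Omega> = {u. loc_integrable \<Omega> u \<and> (\<exists>w. sym_grad_density \<Omega> u w)}"

text \<open>V~_phi^{n x n} of the measure w L^n (w locally integrable):
  int psi : d(w L^n) = int_Omega psi : w dx.\<close>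
definition Vtilde :: "(real^'n) set \<Rightarrow> (real^'n \<Rightarrow> real \<Rightarrow> ennreal) \<Rightarrow> (real^'n \<Rightarrow> real^'n^'n) \<Rightarrow> ereal" where
  "Vtilde \<Omega> \<phi> w = (SUP \<psi> \<in> {\<psi>. \<psi> \<in> C1c \<Omega> \<and> sym_field \<psi> \<and> mnorm_conj \<Omega> \<phi> \<psi> \<le> 1}.
        ereal (\<integral>x. \<psi> x \<bar>:\<bar> w x \<partial>lebesgue_on \<Omega>))"

end

theory Submission
  imports Defs
begin

lemma conj_mono: "t1 \<le> t2 \<Longrightarrow> conj_Phi \<phi> x t1 \<le> conj_Phi \<phi> x t2"
  unfolding conj_Phi_def
  by (rule SUP_mono) (force intro!: ennreal_minus_mono ennreal_leI mult_left_mono)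

lemma conj_nonneg_at: "ennreal (s*t) - \<phi> x s \<le> conj_Phi \<phi> x t" if "s \<ge> 0"
  unfolding conj_Phi_def using that by (intro SUP_upper) auto

lemma lux_alt: "lux \<Omega> \<Psi> h = Inf (ennreal ` {r. r > 0 \<and> (\<integral>\<^sup>+ x\<in>\<Omega>. \<Psi> x (\<bar>h x\<bar> / r) \<partial>lebesgue) \<le> 1})"
  unfolding lux_def by (rule arg_cong[where f=Inf]) auto

lemma lux_le: "r > 0 \<Longrightarrow> (\<integral>\<^sup>+ x\<in>\<Omega>. \<Psi> x (\<bar>h x\<bar> / r) \<partial>lebesgue) \<le> 1 \<Longrightarrow> lux \<Omega> \<Psi> h \<le> ennreal r"
  unfolding lux_alt by (intro Inf_lower) auto

lemma lux_lessE:
  assumes "lux \<Omega> \<Psi> h < ennreal c"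
  obtains r where "r > 0" "r < c" "(\<integral>\<^sup>+ x\<in>\<Omega>. \<Psi> x (\<bar>h x\<bar> / r) \<partial>lebesgue) \<le> 1"
proof -
  from assms[unfolded lux_alt Inf_less_iff] obtain r where
    "r > 0" "(\<integral>\<^sup>+ x\<in>\<Omega>. \<Psi> x (\<bar>h x\<bar> / r) \<partial>lebesgue) \<le> 1" "ennreal r < ennreal c" by auto
  then show ?thesis using that by (auto simp: ennreal_less_iff)
qed

lemma ennreal_Inf_cmult_ge:
  fixes R :: "real set"
  assumes c: "c > 0" and X: "\<And>r. r \<in> R \<Longrightarrow> X \<le> ennreal (c*r)" and nn: "\<And>r. r \<in> R \<Longrightarrow> r \<ge> 0"
  shows "X \<le> ennreal c * Inf (ennreal ` R)"
proof (cases "R = {}")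
  case True then show ?thesis using c by (simp add: ennreal_mult_top)
next
  case False
  then obtain r0 where r0: "r0 \<in> R" by auto
  have "Inf (ennreal ` R) \<le> ennreal r0" using r0 by (intro Inf_lower) auto
  then obtain L where L: "Inf (ennreal ` R) = ennreal L" "L \<ge> 0"
    by (metis ennreal_cases ennreal_le_iff2 top_unique ennreal_neq_top)
  show ?thesis
  proof (rule ennreal_le_epsilon)
    fix e :: real assume e: "0 < e"
    have "Inf (ennreal ` R) < ennreal (L + e/c)" using L e c by (simp add: ennreal_lessI)
    then obtain r where r: "r \<in> R" "ennreal r < ennreal (L + e/c)" by (auto simp: Inf_less_iff)
    then have "r < L + e/c" using ennreal_less_iff[OF nn[OF r(1)]] by blast
    then have "c * r \<le> c * L + e" using c by (simp add: field_simps)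
    then have "ennreal (c*r) \<le> ennreal (c*L + e)" by (rule ennreal_leI)
    also have "\<dots> = ennreal c * Inf (ennreal ` R) + ennreal e"
      using L c e by (simp add: ennreal_mult)
    finally show "X \<le> ennreal c * Inf (ennreal ` R) + ennreal e" using X[OF r(1)] by (rule order_trans[rotated])
  qed
qed

lemma ennreal_Inf_add_ge:
  fixes A B :: "real set"
  assumes X: "\<And>a b. a \<in> A \<Longrightarrow> b \<in> B \<Longrightarrow> X \<le> ennreal (a + b)"
    and nnA: "\<And>r. r \<in> A \<Longrightarrow> r \<ge> 0" and nnB: "\<And>r. r \<in> B \<Longrightarrow> r \<ge> 0"
  shows "X \<le> Inf (ennreal ` A) + Inf (ennreal ` B)"
proof (cases "A = {} \<or> B = {}")
  case True then show ?thesis by auto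
next
  case False
  then obtain a0 b0 where r0: "a0 \<in> A" "b0 \<in> B" by auto
  have "Inf (ennreal ` A) \<le> ennreal a0" using r0 by (intro Inf_lower) auto
  then obtain LA where LA: "Inf (ennreal ` A) = ennreal LA" "LA \<ge> 0"
    by (metis ennreal_cases ennreal_le_iff2 top_unique ennreal_neq_top)
  have "Inf (ennreal ` B) \<le> ennreal b0" using r0 by (intro Inf_lower) auto
  then obtain LB where LB: "Inf (ennreal ` B) = ennreal LB" "LB \<ge> 0"
    by (metis ennreal_cases ennreal_le_iff2 top_unique ennreal_neq_top)
  show ?thesis
  proof (rule ennreal_le_epsilon)
    fix e :: real assume e: "0 < e"
    have "Inf (ennreal ` A) < ennreal (LA + e/2)" using LA e by (simp add: ennreal_lessI)
    then obtain a where a: "a \<in> A" "ennreal a < ennreal (LA + e/2)" by (auto simp: Inf_less_iff)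
    then have a': "a < LA + e/2" using ennreal_less_iff[OF nnA[OF a(1)]] by blast
    have "Inf (ennreal ` B) < ennreal (LB + e/2)" using LB e by (simp add: ennreal_lessI)
    then obtain b where b: "b \<in> B" "ennreal b < ennreal (LB + e/2)" by (auto simp: Inf_less_iff)
    then have b': "b < LB + e/2" using ennreal_less_iff[OF nnB[OF b(1)]] by blast
    have "ennreal (a + b) \<le> ennreal (LA + LB + e)" using a' b' by (intro ennreal_leI) simp
    also have "\<dots> = Inf (ennreal ` A) + Inf (ennreal ` B) + ennreal e"
      using LA LB e by simp
    finally show "X \<le> Inf (ennreal ` A) + Inf (ennreal ` B) + ennreal e" using X[OF a(1) b(1)] by (rule order_trans[rotated])
  qed
qed

lemma lux_mono_scale:
  assumes c: "c > 0" and le: "\<And>x. x \<in> \<Omega> \<Longrightarrow> \<bar>g x\<bar> \<le> c * \<bar>h x\<bar>"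
  shows "lux \<Omega> (conj_Phi \<phi>) g \<le> ennreal c * lux \<Omega> (conj_Phi \<phi>) h"
  unfolding lux_alt[of _ _ h]
proof (rule ennreal_Inf_cmult_ge[OF c])
  fix r assume r: "r \<in> {r. r > 0 \<and> (\<integral>\<^sup>+ x\<in>\<Omega>. conj_Phi \<phi> x (\<bar>h x\<bar> / r) \<partial>lebesgue) \<le> 1}"
  have I: "(\<integral>\<^sup>+ x\<in>\<Omega>. conj_Phi \<phi> x (\<bar>g x\<bar> / (c*r)) \<partial>lebesgue) \<le> (\<integral>\<^sup>+ x\<in>\<Omega>. conj_Phi \<phi> x (\<bar>h x\<bar> / r) \<partial>lebesgue)"
  proof (intro nn_integral_mono)
    fix x
    show "conj_Phi \<phi> x (\<bar>g x\<bar> / (c*r)) * indicator \<Omega> x \<le> conj_Phi \<phi> x (\<bar>h x\<bar> / r) * indicator \<Omega> x"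
    proof (cases "x \<in> \<Omega>")
      case True
      have "\<bar>g x\<bar> / c \<le> \<bar>h x\<bar>" using le[OF True] c by (metis pos_divide_le_eq mult.commute)
      then have "\<bar>g x\<bar> / c / r \<le> \<bar>h x\<bar> / r" using r by (intro divide_right_mono) auto
      then have "\<bar>g x\<bar> / (c*r) \<le> \<bar>h x\<bar> / r" by (simp add: divide_divide_eq_left)
      from conj_mono[OF this] show ?thesis using True by simp
    qed auto
  qed
  have r1: "(\<integral>\<^sup>+ x\<in>\<Omega>. conj_Phi \<phi> x (\<bar>h x\<bar> / r) \<partial>lebesgue) \<le> 1" "r > 0" using r by simp_all
  show "lux \<Omega> (conj_Phi \<phi>) g \<le> ennreal (c * r)"
    using lux_le[where r="c*r" and h=g and \<Psi>="conj_Phi \<phi>" and \<Omega>=\<Omega>, OF mult_pos_pos[OF c r1(2)] order_trans[OF I r1(1)]] .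
qed simp

lemma ennreal_add_le: "ennreal (x + y) \<le> ennreal x + ennreal y"
proof (cases "x \<ge> 0")
  case True
  show ?thesis
  proof (cases "y \<ge> 0")
    case True with \<open>x \<ge> 0\<close> show ?thesis by (simp add: ennreal_plus)
  next
    case False
    then have "ennreal (x + y) \<le> ennreal x" by (intro ennreal_leI) simp
    then show ?thesis by (rule order_trans) simp
  qed
next
  case False
  then have "ennreal (x + y) \<le> ennreal y" by (intro ennreal_leI) simp
  then show ?thesis by (rule order_trans) simp
qed

lemma weak_Phi_const_meas:
  assumes "weak_Phi \<Omega> \<phi>" "s \<ge> 0"
  shows "(\<lambda>x. \<phi> x s) \<in> borel_measurable (lebesgue_on \<Omega>)"
proof -
  have A: "\<forall>f. f \<in> borel_measurable (lebesgue_on \<Omega>) \<longrightarrow> (\<lambda>x. \<phi> x \<bar>f x\<bar>) \<in> borel_measurable (lebesgue_on \<Omega>)"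
    using assms(1) unfolding weak_Phi_def by blast
  have "(\<lambda>x. \<phi> x \<bar>(\<lambda>_. s) x\<bar>) \<in> borel_measurable (lebesgue_on \<Omega>)"
    by (rule A[rule_format]) simp
  then show ?thesis using assms(2) by simp
qed

lemma conj_eq_SUP_rat:
  assumes mono: "mono_on {0..} (\<phi> x)" and T: "T \<ge> 0"
  shows "conj_Phi \<phi> x T = (SUP q\<in>{q. q \<in> \<rat> \<and> q \<ge> 0}. ennreal (q * T) - \<phi> x q)"
proof (rule antisym)
  show "(SUP q\<in>{q. q \<in> \<rat> \<and> q \<ge> 0}. ennreal (q * T) - \<phi> x q) \<le> conj_Phi \<phi> x T"
    unfolding conj_Phi_def by (rule SUP_subset_mono) auto
next
  let ?R = "(SUP q\<in>{q. q \<in> \<rat> \<and> q \<ge> 0}. ennreal (q * T) - \<phi> x q)"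
  show "conj_Phi \<phi> x T \<le> ?R"
    unfolding conj_Phi_def
  proof (rule SUP_least)
    fix s :: real assume s: "s \<in> {0..}"
    show "ennreal (s * T) - \<phi> x s \<le> ?R"
    proof (cases "\<phi> x s = top")
      case True then show ?thesis by simp
    next
      case False
      then obtain p where p: "\<phi> x s = ennreal p" "p \<ge> 0" by (cases "\<phi> x s") auto
      have lhs: "ennreal (s * T) - \<phi> x s = ennreal (s*T - p)" using p by (simp add: ennreal_minus)
      show ?thesis unfolding lhs
      proof (rule ennreal_le_epsilon)
        fix e :: real assume e: "0 < e"
        obtain q where q: "q \<in> \<rat>" "q \<ge> 0" "q \<le> s" "s * T \<le> q * T + e"
        proof (cases "s = 0")
          case True then show ?thesis using that[of 0] e by simp
        next
          case False
          then have s0: "s > 0" using s by simp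
          have "max 0 (s - e/(T+1)) < s" using s0 e T by auto
          then obtain q where q: "q \<in> \<rat>" "max 0 (s - e/(T+1)) < q" "q < s"
            using Rats_dense_in_real by blast
          have "(s - q) * T \<le> (e/(T+1)) * T" using q T by (intro mult_right_mono) auto
          also have "\<dots> \<le> e" using e T by (simp add: field_simps)
          finally have "s * T \<le> q * T + e" by (simp add: algebra_simps)
          then show ?thesis using that[of q] q by auto
        qed
        have "\<phi> x q \<le> \<phi> x s" using mono q s by (auto intro: mono_onD)
        then have "ennreal (q * T) - ennreal p \<le> ennreal (q*T) - \<phi> x q"
          using p by (intro ennreal_minus_mono) auto
        moreover have "ennreal (q*T) - \<phi> x q \<le> ?R" using q by (intro SUP_upper) auto
        ultimately have A: "ennreal (q*T - p) \<le> ?R" using p by (simp add: ennreal_minus)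
        have "ennreal (s*T - p) \<le> ennreal ((q*T - p) + e)" using q by (intro ennreal_leI) simp
        also have "\<dots> \<le> ennreal (q*T - p) + ennreal e" by (rule ennreal_add_le)
        also have "\<dots> \<le> ?R + ennreal e" using A by (rule add_right_mono)
        finally show "ennreal (s*T - p) \<le> ?R + ennreal e" .
      qed
    qed
  qed
qed

lemma conj_measurable:
  assumes wp: "weak_Phi \<Omega> \<phi>" and t: "t \<in> borel_measurable (lebesgue_on \<Omega>)"
    and tnn: "\<And>x. x \<in> \<Omega> \<Longrightarrow> t x \<ge> 0"
  shows "(\<lambda>x. conj_Phi \<phi> x (t x)) \<in> borel_measurable (lebesgue_on \<Omega>)"
proof -
  have mono: "\<And>x. x \<in> \<Omega> \<Longrightarrow> mono_on {0..} (\<phi> x)" using wp unfolding weak_Phi_def by blast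
  have "(\<lambda>x. SUP q\<in>{q. q \<in> \<rat> \<and> q \<ge> 0}. ennreal (q * t x) - \<phi> x q) \<in> borel_measurable (lebesgue_on \<Omega>)"
  proof (rule borel_measurable_SUP)
    show "countable {q::real. q \<in> \<rat> \<and> q \<ge> 0}"
      by (rule countable_subset[OF _ countable_rat]) auto
    fix q :: real assume q: "q \<in> {q. q \<in> \<rat> \<and> q \<ge> 0}"
    have m1: "(\<lambda>x. \<phi> x q) \<in> borel_measurable (lebesgue_on \<Omega>)"
      using weak_Phi_const_meas[OF wp] q by auto
    show "(\<lambda>x. ennreal (q * t x) - \<phi> x q) \<in> borel_measurable (lebesgue_on \<Omega>)"
      using m1 t by measurable
  qed
  then show ?thesis
    by (rule measurable_cong[THEN iffD1, rotated])
       (simp add: conj_eq_SUP_rat[OF mono tnn] space_restrict_space)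
qed

lemma conj_convex:
  assumes l: "0 \<le> l" "l \<le> 1"
  shows "conj_Phi \<phi> x (l*t1 + (1-l)*t2) \<le> ennreal l * conj_Phi \<phi> x t1 + ennreal (1-l) * conj_Phi \<phi> x t2"
  unfolding conj_Phi_def[of \<phi> x "l*t1 + (1-l)*t2"]
proof (rule SUP_least)
  fix s :: real assume s: "s \<in> {0..}"
  have "ennreal (s * (l*t1 + (1-l)*t2)) - \<phi> x s
        \<le> ennreal l * (ennreal (s*t1) - \<phi> x s) + ennreal (1-l) * (ennreal (s*t2) - \<phi> x s)"
  proof (cases "\<phi> x s = top")
    case True then show ?thesis by simp
  next
    case False
    then obtain p where p: "\<phi> x s = ennreal p" "p \<ge> 0" by (cases "\<phi> x s") auto
    have "ennreal (s * (l*t1 + (1-l)*t2) - p) = ennreal (l*(s*t1 - p) + (1-l)*(s*t2-p))"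
      by (simp add: algebra_simps)
    also have "\<dots> \<le> ennreal (l*(s*t1 - p)) + ennreal ((1-l)*(s*t2-p))" by (rule ennreal_add_le)
    also have "\<dots> = ennreal l * ennreal (s*t1 - p) + ennreal (1-l) * ennreal (s*t2-p)"
      using l by (simp add: ennreal_mult')
    finally show ?thesis using p by (simp add: ennreal_minus)
  qed
  also have "\<dots> \<le> ennreal l * conj_Phi \<phi> x t1 + ennreal (1-l) * conj_Phi \<phi> x t2"
    using s by (intro add_mono mult_left_mono conj_nonneg_at) auto
  finally show "ennreal (s * (l*t1 + (1-l)*t2)) - \<phi> x s \<le> ennreal l * conj_Phi \<phi> x t1 + ennreal (1-l) * conj_Phi \<phi> x t2" .
qed

lemma set_nn_integral_lebesgue_on:
  assumes "\<Omega> \<in> sets lebesgue"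
  shows "(\<integral>\<^sup>+ x\<in>\<Omega>. f x \<partial>lebesgue) = (\<integral>\<^sup>+ x. f x \<partial>lebesgue_on \<Omega>)"
  using assms by (simp add: nn_integral_restrict_space)

lemma lux_triangle:
  assumes wp: "weak_Phi \<Omega> \<phi>" and \<Omega>: "\<Omega> \<in> sets lebesgue"
    and g: "g \<in> borel_measurable (lebesgue_on \<Omega>)" and h: "h \<in> borel_measurable (lebesgue_on \<Omega>)"
    and le: "\<And>x. x \<in> \<Omega> \<Longrightarrow> \<bar>k x\<bar> \<le> \<bar>g x\<bar> + \<bar>h x\<bar>"
  shows "lux \<Omega> (conj_Phi \<phi>) k \<le> lux \<Omega> (conj_Phi \<phi>) g + lux \<Omega> (conj_Phi \<phi>) h"
  unfolding lux_alt[of _ _ g] lux_alt[of _ _ h]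
proof (rule ennreal_Inf_add_ge)
  fix a b assume a: "a \<in> {r. r > 0 \<and> (\<integral>\<^sup>+ x\<in>\<Omega>. conj_Phi \<phi> x (\<bar>g x\<bar> / r) \<partial>lebesgue) \<le> 1}"
    and b: "b \<in> {r. r > 0 \<and> (\<integral>\<^sup>+ x\<in>\<Omega>. conj_Phi \<phi> x (\<bar>h x\<bar> / r) \<partial>lebesgue) \<le> 1}"
  have a0: "a > 0" and b0: "b > 0" using a b by auto
  define l where "l = a / (a+b)"
  have l: "0 \<le> l" "l \<le> 1" "1 - l = b/(a+b)" using a0 b0 by (auto simp: l_def field_simps)
  have Ia: "(\<integral>\<^sup>+ x. conj_Phi \<phi> x (\<bar>g x\<bar> / a) \<partial>lebesgue_on \<Omega>) \<le> 1"
    using a by (simp add: set_nn_integral_lebesgue_on[OF \<Omega>])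
  have Ib: "(\<integral>\<^sup>+ x. conj_Phi \<phi> x (\<bar>h x\<bar> / b) \<partial>lebesgue_on \<Omega>) \<le> 1"
    using b by (simp add: set_nn_integral_lebesgue_on[OF \<Omega>])
  have mg: "(\<lambda>x. conj_Phi \<phi> x (\<bar>g x\<bar> / a)) \<in> borel_measurable (lebesgue_on \<Omega>)"
    by (rule conj_measurable[OF wp]) (use g a0 in auto)
  have mh: "(\<lambda>x. conj_Phi \<phi> x (\<bar>h x\<bar> / b)) \<in> borel_measurable (lebesgue_on \<Omega>)"
    by (rule conj_measurable[OF wp]) (use h b0 in auto)
  have "(\<integral>\<^sup>+ x. conj_Phi \<phi> x (\<bar>k x\<bar> / (a+b)) \<partial>lebesgue_on \<Omega>)
     \<le> (\<integral>\<^sup>+ x. ennreal l * conj_Phi \<phi> x (\<bar>g x\<bar> / a) + ennreal (1-l) * conj_Phi \<phi> x (\<bar>h x\<bar> / b) \<partial>lebesgue_on \<Omega>)"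
  proof (rule nn_integral_mono)
    fix x assume "x \<in> space (lebesgue_on \<Omega>)"
    then have x: "x \<in> \<Omega>" by (simp add: space_restrict_space)
    have "\<bar>k x\<bar> / (a+b) \<le> (\<bar>g x\<bar> + \<bar>h x\<bar>) / (a+b)" using le[OF x] a0 b0 by (intro divide_right_mono) auto
    also have "\<dots> = l * (\<bar>g x\<bar> / a) + (1-l) * (\<bar>h x\<bar> / b)"
    proof -
      have 1: "l * (\<bar>g x\<bar> / a) = \<bar>g x\<bar> / (a+b)" using a0 b0 by (simp add: l_def)
      have 2: "(1-l) * (\<bar>h x\<bar> / b) = \<bar>h x\<bar> / (a+b)" using a0 b0 unfolding l(3) by simp
      show ?thesis unfolding 1 2 by (simp add: add_divide_distrib)
    qed
    finally have "conj_Phi \<phi> x (\<bar>k x\<bar> / (a+b)) \<le> conj_Phi \<phi> x (l * (\<bar>g x\<bar> / a) + (1-l) * (\<bar>h x\<bar> / b))"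
      by (rule conj_mono)
    also have "\<dots> \<le> ennreal l * conj_Phi \<phi> x (\<bar>g x\<bar> / a) + ennreal (1-l) * conj_Phi \<phi> x (\<bar>h x\<bar> / b)"
      by (rule conj_convex[OF l(1,2)])
    finally show "conj_Phi \<phi> x (\<bar>k x\<bar> / (a+b)) \<le> ennreal l * conj_Phi \<phi> x (\<bar>g x\<bar> / a) + ennreal (1-l) * conj_Phi \<phi> x (\<bar>h x\<bar> / b)" .
  qed
  also have "\<dots> = ennreal l * (\<integral>\<^sup>+ x. conj_Phi \<phi> x (\<bar>g x\<bar> / a) \<partial>lebesgue_on \<Omega>) + ennreal (1-l) * (\<integral>\<^sup>+ x. conj_Phi \<phi> x (\<bar>h x\<bar> / b) \<partial>lebesgue_on \<Omega>)"
    using mg mh by (simp add: nn_integral_add nn_integral_cmult)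
  also have "\<dots> \<le> ennreal l * 1 + ennreal (1-l) * 1"
    using Ia Ib by (intro add_mono mult_left_mono) auto
  also have "\<dots> = ennreal (l + (1-l))" using l by (subst ennreal_plus) auto
  also have "\<dots> = 1" by simp
  finally have "(\<integral>\<^sup>+ x\<in>\<Omega>. conj_Phi \<phi> x (\<bar>k x\<bar> / (a+b)) \<partial>lebesgue) \<le> 1"
    by (simp add: set_nn_integral_lebesgue_on[OF \<Omega>])
  then show "lux \<Omega> (conj_Phi \<phi>) k \<le> ennreal (a + b)"
    using lux_le[where r="a+b" and h=k and \<Psi>="conj_Phi \<phi>" and \<Omega>=\<Omega>] a0 b0 by simp
qed auto

definition C1 :: "(real^'n \<Rightarrow> 'b::real_normed_vector) \<Rightarrow> bool" where
  "C1 f \<longleftrightarrow> (\<exists>D. (\<forall>x. (f has_derivative D x) (at x)) \<and> (\<forall>v. continuous_on UNIV (\<lambda>x. D x v)))"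

lemma C1I:
  assumes "\<And>x. (f has_derivative D x) (at x)" "\<And>v. continuous_on UNIV (\<lambda>x. D x v)"
  shows "C1 f"
  using assms unfolding C1_def by blast

lemma Ck1_iff: "Ck 1 f \<longleftrightarrow> C1 f"
proof
  assume "Ck 1 f"
  then have d: "\<And>x. f differentiable (at x)" and c: "\<And>v. continuous_on UNIV (\<lambda>x. frechet_derivative f (at x) v)"
    by auto
  show "C1 f" by (rule C1I[of f "\<lambda>x. frechet_derivative f (at x)"]) (use d c frechet_derivative_works in auto)
next
  assume "C1 f"
  then obtain D where d: "\<And>x. (f has_derivative D x) (at x)" and c: "\<And>v. continuous_on UNIV (\<lambda>x. D x v)"
    unfolding C1_def by blast
  have fd: "frechet_derivative f (at x) = D x" for x using frechet_derivative_at[OF d[of x]] by simp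
  show "Ck 1 f" using d c by (auto simp: fd differentiable_def)
qed

lemma C1_cont: "C1 f \<Longrightarrow> continuous_on UNIV f"
  unfolding C1_def by (auto intro!: continuous_at_imp_continuous_on dest: has_derivative_continuous)

lemma C1_const: "C1 (\<lambda>x. c)"
  by (rule C1I[where D="\<lambda>x v. 0"]) auto

lemma C1_ident_minus: "C1 (\<lambda>x::real^'n. x - c)"
  by (rule C1I[where D="\<lambda>x v. v"]) (auto intro!: derivative_eq_intros)

lemma C1_add:
  assumes "C1 f" "C1 g" shows "C1 (\<lambda>x. f x + g x)"
proof -
  obtain Df where f: "\<And>x. (f has_derivative Df x) (at x)" "\<And>v. continuous_on UNIV (\<lambda>x. Df x v)"
    using assms(1) unfolding C1_def by blast
  obtain Dg where g: "\<And>x. (g has_derivative Dg x) (at x)" "\<And>v. continuous_on UNIV (\<lambda>x. Dg x v)"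
    using assms(2) unfolding C1_def by blast
  show ?thesis
    by (rule C1I[where D="\<lambda>x v. Df x v + Dg x v"]) (auto intro!: has_derivative_add f g continuous_on_add)
qed

lemma C1_scaleR:
  fixes a :: "real^'n \<Rightarrow> real"
  assumes "C1 a" "C1 f" shows "C1 (\<lambda>x. a x *\<^sub>R f x)"
proof -
  obtain Da where a: "\<And>x. (a has_derivative Da x) (at x)" "\<And>v. continuous_on UNIV (\<lambda>x. Da x v)"
    using assms(1) unfolding C1_def by blast
  obtain Df where f: "\<And>x. (f has_derivative Df x) (at x)" "\<And>v. continuous_on UNIV (\<lambda>x. Df x v)"
    using assms(2) unfolding C1_def by blast
  have ca: "continuous_on UNIV a" and cf: "continuous_on UNIV f" using assms by (auto intro: C1_cont)
  show ?thesis
    by (rule C1I[where D="\<lambda>x h. a x *\<^sub>R Df x h + Da x h *\<^sub>R f x"])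
       (auto intro!: has_derivative_scaleR a f continuous_intros ca cf)
qed

lemma C1_mult:
  fixes a b :: "real^'n \<Rightarrow> real"
  assumes "C1 a" "C1 b" shows "C1 (\<lambda>x. a x * b x)"
  using C1_scaleR[OF assms] by simp

lemma C1_linear:
  assumes L: "bounded_linear L" and f: "C1 f" shows "C1 (\<lambda>x. L (f x))"
proof -
  obtain Df where f: "\<And>x. (f has_derivative Df x) (at x)" "\<And>v. continuous_on UNIV (\<lambda>x. Df x v)"
    using f unfolding C1_def by blast
  have cL: "continuous_on UNIV L" using L by (simp add: linear_continuous_on)
  show ?thesis
    by (rule C1I[where D="\<lambda>x h. L (Df x h)"])
       (auto intro!: bounded_linear.has_derivative[OF L] f continuous_on_compose2[OF cL f(2)])
qed

lemma C1_inner: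
  fixes f g :: "real^'n \<Rightarrow> 'b::real_inner"
  assumes "C1 f" "C1 g" shows "C1 (\<lambda>x. f x \<bullet> g x)"
proof -
  obtain Df where f: "\<And>x. (f has_derivative Df x) (at x)" "\<And>v. continuous_on UNIV (\<lambda>x. Df x v)"
    using assms(1) unfolding C1_def by blast
  obtain Dg where g: "\<And>x. (g has_derivative Dg x) (at x)" "\<And>v. continuous_on UNIV (\<lambda>x. Dg x v)"
    using assms(2) unfolding C1_def by blast
  have cf: "continuous_on UNIV f" and cg: "continuous_on UNIV g" using assms by (auto intro: C1_cont)
  show ?thesis
    by (rule C1I[where D="\<lambda>x h. f x \<bullet> Dg x h + Df x h \<bullet> g x"])
       (auto intro!: has_derivative_inner f g continuous_intros cf cg)
qed

lemma C1_comp_real: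
  fixes a :: "real^'n \<Rightarrow> real"
  assumes a: "C1 a" and S: "\<And>x. a x \<in> S"
    and d: "\<And>t. t \<in> S \<Longrightarrow> (\<sigma> has_real_derivative \<sigma>' t) (at t)"
    and c: "continuous_on S \<sigma>'"
  shows "C1 (\<lambda>x. \<sigma> (a x))"
proof -
  obtain Da where a': "\<And>x. (a has_derivative Da x) (at x)" "\<And>v. continuous_on UNIV (\<lambda>x. Da x v)"
    using a unfolding C1_def by blast
  have ca: "continuous_on UNIV a" using a by (rule C1_cont)
  have cc: "continuous_on UNIV (\<lambda>x. \<sigma>' (a x))"
    by (rule continuous_on_compose2[OF c ca]) (use S in auto)
  show ?thesis
  proof (rule C1I[where D="\<lambda>x h. \<sigma>' (a x) * Da x h"])
    fix x
    have "(\<sigma> has_derivative (*) (\<sigma>' (a x))) (at (a x))" using d[OF S[of x]] by (simp add: has_field_derivative_def)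
    then show "((\<lambda>x. \<sigma> (a x)) has_derivative (\<lambda>h. \<sigma>' (a x) * Da x h)) (at x)"
      by (rule has_derivative_compose[OF a'(1)])
  next
    fix v show "continuous_on UNIV (\<lambda>x. \<sigma>' (a x) * Da x v)"
      by (intro continuous_on_mult cc a'(2))
  qed
qed

lemma C1_sum:
  assumes "finite I" "\<And>i. i \<in> I \<Longrightarrow> C1 (f i)" shows "C1 (\<lambda>x. \<Sum>i\<in>I. f i x)"
  using assms by (induction I rule: finite_induct) (auto intro: C1_add C1_const)

definition qf :: "real \<Rightarrow> real" where "qf t = (max t 0)^2"

lemma qf_deriv: "(qf has_real_derivative (2 * max t 0)) (at t)"
proof (cases "t > 0")
  case True
  have "((\<lambda>t. t^2) has_real_derivative (2 * t)) (at t)" by (auto intro!: derivative_eq_intros)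
  then have "(qf has_real_derivative (2 * t)) (at t)"
    by (rule has_field_derivative_transform_within_open[where S="{0<..}"]) (use True in \<open>auto simp: qf_def\<close>)
  then show ?thesis using True by simp
next
  case False
  show ?thesis
  proof (cases "t < 0")
    case True
    have "((\<lambda>t. 0) has_real_derivative 0) (at t)" by (auto intro!: derivative_eq_intros)
    then have "(qf has_real_derivative 0) (at t)"
      by (rule has_field_derivative_transform_within_open[where S="{..<0}"]) (use True in \<open>auto simp: qf_def\<close>)
    then show ?thesis using True by simp
  next
    case False
    then have t: "t = 0" using \<open>\<not> t > 0\<close> by simp
    have "((\<lambda>y. max y 0) \<longlongrightarrow> max 0 0) (at (0::real))"
      by (intro tendsto_intros)
    then have "((\<lambda>y. max y 0) \<longlongrightarrow> 0) (at (0::real))" by simp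
    moreover have "\<forall>\<^sub>F y in at (0::real). max y 0 = (qf y - qf 0) / (y - 0)"
      by (auto simp: qf_def eventually_at_filter power2_eq_square max_def)
    ultimately have "((\<lambda>y. (qf y - qf 0) / (y - 0)) \<longlongrightarrow> 0) (at (0::real))"
      by (rule Lim_transform_eventually)
    then show ?thesis using t by (simp add: has_field_derivative_iff)
  qed
qed

lemma C1_qf: "C1 a \<Longrightarrow> C1 (\<lambda>x. qf (a x))"
  by (rule C1_comp_real[where S=UNIV and \<sigma>'="\<lambda>t. 2 * max t 0"]) (auto intro!: qf_deriv continuous_intros)

lemma C1_scale: "C1 f \<Longrightarrow> C1 (\<lambda>x. c *\<^sub>R f x)"
  using C1_scaleR[OF C1_const] by blast

lemma C1_diff: "C1 f \<Longrightarrow> C1 g \<Longrightarrow> C1 (\<lambda>x. f x - g x)"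
  using C1_add[OF _ C1_scale[of g "-1"]] by simp

lemma qf_nonneg: "qf t \<ge> 0" by (simp add: qf_def)

lemma qf_pos_iff: "qf t > 0 \<longleftrightarrow> t > 0"
  by (auto simp: qf_def max_def)

lemma qf_le1: "t \<le> 1 \<Longrightarrow> qf t \<le> 1"
  by (auto simp: qf_def max_def power_le_one)

lemma qf_zero: "t \<le> 0 \<Longrightarrow> qf t = 0" by (simp add: qf_def)

lemma cutoff_exists:
  fixes K \<Omega> :: "(real^'n) set"
  assumes K: "compact K" and \<Omega>: "open \<Omega>" and KO: "K \<subseteq> \<Omega>"
  obtains ch :: "real^'n \<Rightarrow> real" where "C1 ch" "\<And>x. 0 \<le> ch x" "\<And>x. ch x \<le> 1" "\<And>x. x \<in> K \<Longrightarrow> ch x = 1"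
    "compact (closure {x. ch x \<noteq> 0})" "closure {x. ch x \<noteq> 0} \<subseteq> \<Omega>"
proof (cases "K = {}")
  case True
  show ?thesis by (rule that[of "\<lambda>x. 0::real"]) (auto simp: True C1_const)
next
  case Kne: False
  obtain e where e: "e > 0" "(\<Union>x\<in>K. ball x e) \<subseteq> \<Omega>"
    using compact_subset_open_imp_ball_epsilon_subset[OF K \<Omega> KO] by blast
  define r where "r = e/2"
  have r: "r > 0" "r < e" using e by (auto simp: r_def)
  obtain F where F: "F \<subseteq> K" "finite F" "K \<subseteq> (\<Union>c\<in>F. ball c r)"
    using compactE_image[OF K, of K "\<lambda>c. ball c r"] r by force
  define S where "S x = (\<Sum>c\<in>F. qf (r^2 - (x - c) \<bullet> (x - c)))" for x
  have C1S: "C1 S" unfolding S_def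
    by (intro C1_sum C1_qf C1_diff C1_const C1_inner C1_ident_minus F)
  have Snn: "S x \<ge> 0" for x unfolding S_def by (intro sum_nonneg qf_nonneg)
  have Spos: "S x > 0 \<longleftrightarrow> (\<exists>c\<in>F. dist x c < r)" for x
  proof -
    have "S x > 0 \<longleftrightarrow> (\<exists>c\<in>F. qf (r^2 - (x - c) \<bullet> (x - c)) > 0)"
    proof -
      have "S x > 0 \<longleftrightarrow> S x \<noteq> 0" using Snn[of x] by auto
      also have "\<dots> \<longleftrightarrow> \<not> (\<forall>c\<in>F. qf (r^2 - (x - c) \<bullet> (x - c)) = 0)"
        unfolding S_def using F(2) by (subst sum_nonneg_eq_0_iff) (auto intro: qf_nonneg)
      also have "\<dots> \<longleftrightarrow> (\<exists>c\<in>F. qf (r^2 - (x - c) \<bullet> (x - c)) > 0)"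
        using qf_nonneg by (auto simp: less_le)
      finally show ?thesis .
    qed
    also have "\<dots> \<longleftrightarrow> (\<exists>c\<in>F. dist x c < r)"
    proof -
      have "qf (r^2 - (x - c) \<bullet> (x - c)) > 0 \<longleftrightarrow> dist x c < r" for c
      proof -
        have "(x - c) \<bullet> (x - c) = (dist x c)^2" by (simp add: dist_norm power2_norm_eq_inner)
        then have "qf (r^2 - (x - c) \<bullet> (x - c)) > 0 \<longleftrightarrow> (dist x c)^2 < r^2" by (simp add: qf_pos_iff)
        also have "\<dots> \<longleftrightarrow> dist x c < r" using r(1) zero_le_dist[of x c] power2_less_imp_less[of "dist x c" r] power2_strict_mono[of "dist x c" r] by auto
        finally show ?thesis .
      qed
      then show ?thesis by simp
    qed
    finally show ?thesis .
  qed
  obtain x0 where x0: "x0 \<in> K" "\<And>y. y \<in> K \<Longrightarrow> S x0 \<le> S y"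
    using continuous_attains_inf[OF K Kne continuous_on_subset[OF C1_cont[OF C1S]]] by auto
  define m where "m = S x0"
  have m: "m > 0" using x0(1) F(3) Spos[of x0] unfolding m_def by (auto simp: dist_commute)
  define ch where "ch x = 1 - qf (1 - S x / m)" for x
  show ?thesis
  proof (rule that[of ch])
    show "C1 ch" unfolding ch_def
      by (intro C1_diff C1_const C1_qf) (use C1_scale[OF C1S, of "1/m"] in simp)
    fix x
    have "1 - S x / m \<le> 1" using Snn[of x] m by simp
    then show "ch x \<le> 1" "0 \<le> ch x" unfolding ch_def using qf_le1 qf_nonneg by (auto simp: algebra_simps)
  next
    fix x assume "x \<in> K"
    then have "S x \<ge> m" using x0 m_def by auto
    then have "1 - S x / m \<le> 0" using m by (simp add: field_simps)
    then show "ch x = 1" unfolding ch_def by (simp add: qf_zero)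
  next
    define B where "B = (\<Union>c\<in>F. cball c r)"
    have sub: "{x. ch x \<noteq> 0} \<subseteq> B"
    proof
      fix x assume "x \<in> {x. ch x \<noteq> 0}"
      then have "S x \<noteq> 0" by (auto simp: ch_def qf_def)
      then have "S x > 0" using Snn[of x] by simp
      then obtain c where "c \<in> F" "dist x c < r" using Spos by auto
      then show "x \<in> B" unfolding B_def by (auto simp: dist_commute intro!: bexI[of _ c] less_imp_le)
    qed
    have cB: "compact B" unfolding B_def using F(2) by (intro compact_UN) auto
    have clB: "closure {x. ch x \<noteq> 0} \<subseteq> B"
      by (rule closure_minimal[OF sub compact_imp_closed[OF cB]])
    show "compact (closure {x. ch x \<noteq> 0})"
      unfolding compact_closure by (rule bounded_subset[OF compact_imp_bounded[OF cB] sub])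
    have "B \<subseteq> \<Omega>"
    proof
      fix x assume "x \<in> B"
      then obtain c where c: "c \<in> F" "dist c x \<le> r" by (auto simp: B_def)
      then have "x \<in> ball c e" using r by auto
      then show "x \<in> \<Omega>" using e(2) c(1) F(1) by blast
    qed
    then show "closure {x. ch x \<noteq> 0} \<subseteq> \<Omega>" using clB by auto
  qed
qed

lemma frob_inner: "A \<bar>:\<bar> B = A \<bullet> B"
  unfolding frob_def inner_vec_def by (simp add: inner_real_def)

definition mtr :: "real^'n^'n \<Rightarrow> real^'n^'n" where
  "mtr A = (\<chi> i j. A $ j $ i)"

definition msym :: "real^'n^'n \<Rightarrow> real^'n^'n" where
  "msym A = (1/2) *\<^sub>R (A + mtr A)"

lemma mtr_linear: "bounded_linear mtr"
  unfolding linear_conv_bounded_linear[symmetric]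
  by (rule linearI) (auto simp: mtr_def vec_eq_iff)

lemma msym_linear: "bounded_linear msym"
  unfolding linear_conv_bounded_linear[symmetric] msym_def
  by (rule linearI) (auto simp: mtr_def vec_eq_iff algebra_simps)

lemma inner_mtr: "mtr A \<bullet> mtr A = A \<bullet> A"
  unfolding inner_vec_def mtr_def inner_real_def by (simp, rule sum.swap)

lemma norm_mtr: "norm (mtr A) = norm A"
  by (simp add: norm_eq_sqrt_inner inner_mtr)

lemma norm_msym: "norm (msym A) \<le> norm A"
proof -
  have "norm (msym A) = (1/2) * norm (A + mtr A)" by (simp add: msym_def)
  also have "\<dots> \<le> (1/2) * (norm A + norm (mtr A))" by (intro mult_left_mono norm_triangle_ineq) auto
  finally show ?thesis by (simp add: norm_mtr)
qed

lemma msym_sym: "msym A $ i $ j = msym A $ j $ i"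
  by (simp add: msym_def mtr_def)

lemma msym_id: "(\<And>i j. A $ i $ j = A $ j $ i) \<Longrightarrow> msym A = A"
  by (simp add: msym_def mtr_def vec_eq_iff)

lemma msym_minus: "msym A - msym B = msym (A - B)"
  by (simp add: msym_def mtr_def vec_eq_iff algebra_simps)

definition Tk :: "real \<Rightarrow> 'a::real_inner \<Rightarrow> 'a" where
  "Tk k A = (k / sqrt (k^2 + A \<bullet> A)) *\<^sub>R A"

lemma Tk_alt: "Tk k A = (k / sqrt (k^2 + (norm A)^2)) *\<^sub>R A"
  by (simp add: Tk_def power2_norm_eq_inner)

lemma sqrt_lip:
  fixes s t k :: real assumes st: "s \<ge> 0" "t \<ge> 0"
  shows "\<bar>sqrt (k^2 + s^2) - sqrt (k^2 + t^2)\<bar> \<le> \<bar>s - t\<bar>"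
proof -
  define P where "P = sqrt (k^2 + s^2)"
  define Q where "Q = sqrt (k^2 + t^2)"
  have P: "P \<ge> s" "P^2 = k^2 + s^2" unfolding P_def by (auto intro: real_le_rsqrt)
  have Q: "Q \<ge> t" "Q^2 = k^2 + t^2" unfolding Q_def by (auto intro: real_le_rsqrt)
  have e: "(P - Q) * (P + Q) = (s - t) * (s + t)" using P(2) Q(2) by (simp add: algebra_simps power2_eq_square)
  have PQ0: "P + Q \<ge> 0" using P Q st by linarith
  have "\<bar>(P - Q) * (P + Q)\<bar> = \<bar>(s - t) * (s + t)\<bar>" using e by simp
  then have "\<bar>P - Q\<bar> * (P + Q) = \<bar>s - t\<bar> * (s + t)" using PQ0 st by (simp add: abs_mult)
  also have "\<dots> \<le> \<bar>s - t\<bar> * (P + Q)" using P Q by (intro mult_left_mono) auto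
  finally have *: "\<bar>P - Q\<bar> * (P + Q) \<le> \<bar>s - t\<bar> * (P + Q)" .
  show ?thesis
  proof (cases "P + Q = 0")
    case True
    then have "P = 0" "Q = 0" using P Q st by linarith+
    then show ?thesis unfolding P_def[symmetric] Q_def[symmetric] by simp
  next
    case False
    then have "P + Q > 0" using PQ0 by simp
    from mult_right_le_imp_le[OF * this] show ?thesis unfolding P_def Q_def .
  qed
qed

lemma Tk_norm_le: "k > 0 \<Longrightarrow> norm (Tk k A) \<le> k"
proof -
  assume k: "k > 0"
  define P where "P = sqrt (k^2 + (norm A)^2)"
  have "norm A \<le> P" unfolding P_def by (intro real_le_rsqrt) auto
  moreover have P0: "P > 0" unfolding P_def using k by (intro real_sqrt_gt_zero) (simp add: add_pos_nonneg)
  ultimately have "norm A / P \<le> 1" by simp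
  have "norm (Tk k A) = k * (norm A / P)" using k P0 by (simp add: Tk_alt P_def[symmetric] abs_of_pos)
  also have "\<dots> \<le> k" using \<open>norm A / P \<le> 1\<close> k P0 by (intro mult_right_le_one_le) auto
  finally show ?thesis .
qed

lemma Tk_norm_le': "k > 0 \<Longrightarrow> norm (Tk k A) \<le> norm A"
proof -
  assume k: "k > 0"
  define P where "P = sqrt (k^2 + (norm A)^2)"
  have "k \<le> P" unfolding P_def using k by (intro real_le_rsqrt) auto
  moreover have P0: "P > 0" unfolding P_def using k by (intro real_sqrt_gt_zero) (simp add: add_pos_nonneg)
  ultimately have "k / P \<le> 1" by simp
  have "norm (Tk k A) = (k / P) * norm A" using k P0 by (simp add: Tk_alt P_def[symmetric] abs_of_pos)
  also have "\<dots> \<le> norm A" using \<open>k / P \<le> 1\<close> k P0 by (intro mult_left_le_one_le) auto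
  finally show ?thesis .
qed

lemma Tk_lip:
  fixes A B :: "'a::real_inner"
  assumes k: "k > 0"
  shows "norm (Tk k A - Tk k B) \<le> 2 * norm (A - B)"
proof -
  define P where "P = sqrt (k^2 + (norm A)^2)"
  define Q where "Q = sqrt (k^2 + (norm B)^2)"
  have P0: "P > 0" unfolding P_def using k by (intro real_sqrt_gt_zero) (simp add: add_pos_nonneg)
  have Q0: "Q > 0" unfolding Q_def using k by (intro real_sqrt_gt_zero) (simp add: add_pos_nonneg)
  have kP: "k \<le> P" unfolding P_def using k by (intro real_le_rsqrt) auto
  have kQ: "k \<le> Q" unfolding Q_def using k by (intro real_le_rsqrt) auto
  have BQ: "norm B \<le> Q" unfolding Q_def by (intro real_le_rsqrt) auto
  have PQ: "\<bar>P - Q\<bar> \<le> norm (A - B)"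
  proof -
    have "\<bar>P - Q\<bar> \<le> \<bar>norm A - norm B\<bar>" unfolding P_def Q_def by (rule sqrt_lip) auto
    also have "\<dots> \<le> norm (A - B)" by (rule norm_triangle_ineq3)
    finally show ?thesis .
  qed
  have eq: "Tk k A - Tk k B = (k/P) *\<^sub>R (A - B) + (k/P - k/Q) *\<^sub>R B"
    by (simp add: Tk_alt P_def Q_def algebra_simps)
  have "k/P \<le> 1" using kP P0 by simp
  have "norm ((k/P) *\<^sub>R (A - B)) = (k/P) * norm (A - B)" using k P0 by (simp add: abs_of_pos)
  also have "\<dots> \<le> norm (A - B)" using \<open>k/P \<le> 1\<close> k P0 by (intro mult_left_le_one_le) auto
  finally have 1: "norm ((k/P) *\<^sub>R (A - B)) \<le> norm (A - B)" .
  have d: "k/P - k/Q = (k/P) * ((Q - P)/Q)" using P0 Q0 by (simp add: field_simps)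
  have "norm ((k/P - k/Q) *\<^sub>R B) = \<bar>k/P - k/Q\<bar> * norm B" by simp
  also have "\<dots> = (k/P) * (\<bar>Q - P\<bar>/Q) * norm B" unfolding d using k P0 Q0 by (simp add: abs_mult abs_divide)
  also have "\<dots> = (k / P) * (norm B / Q) * \<bar>Q - P\<bar>" by simp
  also have "\<dots> \<le> 1 * 1 * \<bar>Q - P\<bar>"
    using P0 Q0 k kP BQ by (intro mult_mono) (auto simp: divide_le_eq_1)
  also have "\<dots> \<le> norm (A - B)" using PQ by (simp add: abs_minus_commute)
  finally have 2: "norm ((k/P - k/Q) *\<^sub>R B) \<le> norm (A - B)" .
  show ?thesis unfolding eq using norm_triangle_ineq[of "(k/P) *\<^sub>R (A - B)" "(k/P - k/Q) *\<^sub>R B"] 1 2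
    by linarith
qed

lemma open_lebesgue: "open S \<Longrightarrow> S \<in> sets lebesgue"
  by simp

lemma closed_lebesgue: "closed S \<Longrightarrow> S \<in> sets lebesgue"
  by simp

lemma compact_emeasure_lebesgue_finite: "compact S \<Longrightarrow> emeasure lebesgue S < \<infinity>"
  by (metis fmeasurableD2 infinity_ennreal_def lmeasurable_compact top.not_eq_extremum)

lemma C1c_cont: "\<psi> \<in> C1c \<Omega> \<Longrightarrow> continuous_on UNIV \<psi>"
  unfolding C1c_def using Ck1_iff C1_cont by blast

lemma part1:
  assumes \<Omega>: "open \<Omega>"
  shows "Vtilde \<Omega> \<phi> w \<le> enn2ereal (assoc_norm \<Omega> \<phi> w)"
  unfolding Vtilde_def
proof (rule SUP_least)
  fix \<psi> assume \<psi>: "\<psi> \<in> {\<psi>. \<psi> \<in> C1c \<Omega> \<and> sym_field \<psi> \<and> mnorm_conj \<Omega> \<phi> \<psi> \<le> 1}"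
  have \<Omega>L: "\<Omega> \<in> sets lebesgue" using \<Omega> by (rule open_lebesgue)
  define F where "F x = \<psi> x \<bar>:\<bar> w x" for x
  have Fle: "\<bar>F x\<bar> \<le> norm (w x) * \<bar>norm (\<psi> x)\<bar>" for x
    unfolding F_def frob_inner using Cauchy_Schwarz_ineq2[of "\<psi> x" "w x"] by (simp add: mult.commute)
  have A: "ereal (integral\<^sup>L (lebesgue_on \<Omega>) F) \<le> enn2ereal (\<integral>\<^sup>+x. ennreal (norm (w x) * \<bar>norm (\<psi> x)\<bar>) \<partial>lebesgue_on \<Omega>)"
  proof (cases "integrable (lebesgue_on \<Omega>) F")
    case True
    have "ereal (integral\<^sup>L (lebesgue_on \<Omega>) F) \<le> ereal (integral\<^sup>L (lebesgue_on \<Omega>) (\<lambda>x. \<bar>F x\<bar>))"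
      using True by (subst ereal_less_eq(3)) (intro integral_mono, auto)
    also have "\<dots> = enn2ereal (ennreal (integral\<^sup>L (lebesgue_on \<Omega>) (\<lambda>x. \<bar>F x\<bar>)))"
      by (intro enn2ereal_ennreal[symmetric] integral_nonneg) auto
    also have "ennreal (integral\<^sup>L (lebesgue_on \<Omega>) (\<lambda>x. \<bar>F x\<bar>)) = (\<integral>\<^sup>+x. ennreal \<bar>F x\<bar> \<partial>lebesgue_on \<Omega>)"
      using True by (intro nn_integral_eq_integral[symmetric]) auto
    also have "enn2ereal (\<integral>\<^sup>+x. ennreal \<bar>F x\<bar> \<partial>lebesgue_on \<Omega>) \<le> enn2ereal (\<integral>\<^sup>+x. ennreal (norm (w x) * \<bar>norm (\<psi> x)\<bar>) \<partial>lebesgue_on \<Omega>)"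
      unfolding less_eq_ennreal.rep_eq[symmetric] using Fle by (intro nn_integral_mono ennreal_leI) auto
    finally show ?thesis .
  next
    case False
    then show ?thesis by (simp add: not_integrable_integral_eq) (metis enn2ereal_nonneg zero_ereal_def)
  qed
  have B: "(\<integral>\<^sup>+x. ennreal (norm (w x) * \<bar>norm (\<psi> x)\<bar>) \<partial>lebesgue_on \<Omega>) \<le> assoc_norm \<Omega> \<phi> w"
    unfolding assoc_norm_def set_nn_integral_lebesgue_on[OF \<Omega>L, symmetric]
  proof (rule SUP_upper2[where i="\<lambda>x. norm (\<psi> x)"])
    have "continuous_on \<Omega> (\<lambda>x. norm (\<psi> x))"
      using \<psi> by (intro continuous_on_subset[OF continuous_on_norm[OF C1c_cont[of \<psi> \<Omega>]]]) auto
    then have "(\<lambda>x. norm (\<psi> x)) \<in> borel_measurable (lebesgue_on \<Omega>)"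
      using \<Omega>L by (rule continuous_imp_measurable_on_sets_lebesgue)
    moreover have "lux \<Omega> (conj_Phi \<phi>) (\<lambda>x. norm (\<psi> x)) \<le> 1" using \<psi> unfolding mnorm_conj_def by blast
    ultimately show "(\<lambda>x. norm (\<psi> x)) \<in> {v \<in> borel_measurable (lebesgue_on \<Omega>). lux \<Omega> (conj_Phi \<phi>) v \<le> 1}"
      by simp
  qed (rule order_refl)
  show "ereal (integral\<^sup>L (lebesgue_on \<Omega>) (\<lambda>x. \<psi> x \<bar>:\<bar> w x)) \<le> enn2ereal (assoc_norm \<Omega> \<phi> w)"
    using order_trans[OF A B[unfolded less_eq_ennreal.rep_eq]] unfolding F_def .
qed

lemma conj_to_infty:
  assumes wp: "weak_Phi \<Omega> \<phi>" and x: "x \<in> \<Omega>"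
  shows "\<exists>j::nat. ennreal R < conj_Phi \<phi> x (real j)"
proof -
  have "((\<phi> x) \<longlongrightarrow> 0) (at_right 0)" using wp x unfolding weak_Phi_def by blast
  then have "\<forall>\<^sub>F s in at_right 0. \<phi> x s < 1" by (rule order_tendstoD(2)) simp
  then obtain b where b: "b > 0" "\<And>s. s > 0 \<Longrightarrow> s < b \<Longrightarrow> \<phi> x s < 1"
    unfolding eventually_at_right_field by auto
  define s where "s = b/2"
  have s: "s > 0" "\<phi> x s \<le> 1" using b by (auto simp: s_def intro!: less_imp_le)
  obtain j :: nat where j: "(\<bar>R\<bar> + 1) / s < real j" using reals_Archimedean2 by blast
  then have "\<bar>R\<bar> + 1 < s * real j" using s by (simp add: field_simps)
  then have "ennreal R < ennreal (s * real j - 1)" by (intro ennreal_lessI) auto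
  also have "\<dots> = ennreal (s * real j) - ennreal 1" by (simp only: ennreal_minus[of 1])
  also have "\<dots> = ennreal (s * real j) - 1" by simp
  also have "\<dots> \<le> ennreal (s * real j) - \<phi> x s" by (intro ennreal_minus_mono s) simp
  also have "\<dots> \<le> conj_Phi \<phi> x (real j)" using s by (intro conj_nonneg_at) simp
  finally show ?thesis by blast
qed

lemma lux_small_measure:
  assumes wp: "weak_Phi \<Omega> \<phi>" and \<Omega>: "\<Omega> \<in> sets lebesgue" and K: "compact K" "K \<subseteq> \<Omega>"
    and \<delta>: "\<delta> > 0" and \<rho>: "\<rho> > 0"
  obtains \<eta> where "\<eta> > 0"
    "\<And>h. h \<in> borel_measurable (lebesgue_on \<Omega>) \<Longrightarrow> lux \<Omega> (conj_Phi \<phi>) h < ennreal \<eta> \<Longrightarrow>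
        emeasure (lebesgue_on \<Omega>) {x\<in>K. \<delta> < \<bar>h x\<bar>} < ennreal \<rho>"
proof -
  let ?M = "lebesgue_on \<Omega>"
  have KM: "K \<in> sets ?M" using K \<Omega> by (simp add: sets_restrict_space_iff compact_imp_closed closed_lebesgue)
  define R where "R = 2 / \<rho>"
  have R: "R > 0" using \<rho> by (simp add: R_def)
  define F where "F j x = conj_Phi \<phi> x (real j)" for j :: nat and x
  have Fm: "F j \<in> borel_measurable ?M" for j
    unfolding F_def by (rule conj_measurable[OF wp]) auto
  define D where "D j = {x\<in>K. F j x \<le> ennreal R}" for j
  have Dsets: "D j \<in> sets ?M" for j
  proof -
    have "{x \<in> space ?M. F j x \<le> ennreal R} \<in> sets ?M" using Fm[of j] by measurable
    then have "{x \<in> space ?M. F j x \<le> ennreal R} \<inter> K \<in> sets ?M" using KM by blast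
    moreover have "{x \<in> space ?M. F j x \<le> ennreal R} \<inter> K = D j" using K by (auto simp: D_def)
    ultimately show ?thesis by simp
  qed
  have dec: "antimono_on UNIV D"
  proof (rule antimonoI)
    fix i j :: nat assume "i \<le> j"
    then have "F i x \<le> F j x" for x unfolding F_def by (intro conj_mono) simp
    then show "D j \<le> D i" unfolding D_def using order_trans by fastforce
  qed
  have fin: "emeasure ?M (D j) \<noteq> \<infinity>" for j
  proof -
    have "emeasure ?M (D j) \<le> emeasure ?M K" using KM by (intro emeasure_mono) (auto simp: D_def)
    also have "\<dots> = emeasure lebesgue K" using K \<Omega> by (intro emeasure_restrict_space) auto
    also have "\<dots> < \<infinity>" using K by (intro compact_emeasure_lebesgue_finite)
    finally show ?thesis by simp
  qed
  have empty: "(\<Inter>j. D j) = {}"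
  proof (rule ccontr)
    assume "(\<Inter>j. D j) \<noteq> {}"
    then obtain x where x: "\<And>j. x \<in> D j" by auto
    then have "x \<in> \<Omega>" using K by (auto simp: D_def)
    from conj_to_infty[OF wp this, of R] obtain j where "ennreal R < F j x" unfolding F_def by blast
    with x[of j] show False by (auto simp: D_def)
  qed
  have "(\<lambda>j. emeasure ?M (D j)) \<longlonglongrightarrow> emeasure ?M (\<Inter>j. D j)"
    by (rule Lim_emeasure_decseq) (use Dsets dec fin in auto)
  then have "(\<lambda>j. emeasure ?M (D j)) \<longlonglongrightarrow> 0" unfolding empty by simp
  then have "\<forall>\<^sub>F j in sequentially. emeasure ?M (D j) < ennreal (\<rho>/2)"
    by (rule order_tendstoD(2)) (use \<rho> in simp)
  then obtain j where j: "emeasure ?M (D j) < ennreal (\<rho>/2)" by (auto simp: eventually_sequentially)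
  define \<eta> where "\<eta> = \<delta> / (real j + 1)"
  have \<eta>: "\<eta> > 0" using \<delta> by (simp add: \<eta>_def)
  show ?thesis
  proof (rule that[OF \<eta>])
    fix h assume hm: "h \<in> borel_measurable ?M" and hl: "lux \<Omega> (conj_Phi \<phi>) h < ennreal \<eta>"
    obtain r where r: "r > 0" "r < \<eta>" "(\<integral>\<^sup>+ x\<in>\<Omega>. conj_Phi \<phi> x (\<bar>h x\<bar> / r) \<partial>lebesgue) \<le> 1"
      using lux_lessE[OF hl] by blast
    have rI: "(\<integral>\<^sup>+ x. conj_Phi \<phi> x (\<bar>h x\<bar> / r) \<partial>?M) \<le> 1"
      using r(3) by (simp add: set_nn_integral_lebesgue_on[OF \<Omega>])
    define A where "A = {x\<in>K. \<delta> < \<bar>h x\<bar>}"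
    define E where "E = {x\<in>K. \<delta> < \<bar>h x\<bar> \<and> ennreal R < F j x}"
    have Esets: "E \<in> sets ?M"
    proof -
      have "{x \<in> space ?M. \<delta> < \<bar>h x\<bar> \<and> ennreal R < F j x} \<in> sets ?M" using Fm[of j] hm by measurable
      then have "{x \<in> space ?M. \<delta> < \<bar>h x\<bar> \<and> ennreal R < F j x} \<inter> K \<in> sets ?M" using KM by blast
      moreover have "{x \<in> space ?M. \<delta> < \<bar>h x\<bar> \<and> ennreal R < F j x} \<inter> K = E" using K by (auto simp: E_def)
      ultimately show ?thesis by simp
    qed
    have AsubDE: "A \<subseteq> D j \<union> E" by (auto simp: A_def D_def E_def not_le)
    have FE: "F j x \<le> conj_Phi \<phi> x (\<bar>h x\<bar> / r)" if "x \<in> E" for x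
    proof -
      have "\<delta> / \<eta> = real j + 1" using \<delta> by (simp add: \<eta>_def)
      moreover have "\<delta> / \<eta> \<le> \<delta> / r" using r \<delta> by (intro divide_left_mono) auto
      moreover have "\<delta> / r \<le> \<bar>h x\<bar> / r" using that r by (intro divide_right_mono) (auto simp: E_def)
      ultimately have "real j \<le> \<bar>h x\<bar> / r" by linarith
      then show ?thesis unfolding F_def by (rule conj_mono)
    qed
    have "ennreal R * emeasure ?M E = (\<integral>\<^sup>+ x. ennreal R * indicator E x \<partial>?M)"
      using nn_integral_cmult_indicator[OF Esets, of "ennreal R"] by (simp add: mult.commute)
    also have "\<dots> \<le> (\<integral>\<^sup>+ x. conj_Phi \<phi> x (\<bar>h x\<bar> / r) \<partial>?M)"
    proof (rule nn_integral_mono)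
      fix x assume "x \<in> space ?M"
      show "ennreal R * indicator E x \<le> conj_Phi \<phi> x (\<bar>h x\<bar> / r)"
      proof (cases "x \<in> E")
        case True
        then have "ennreal R \<le> F j x" by (auto simp: E_def)
        then show ?thesis using True FE[OF True] by simp
      qed simp
    qed
    also have "\<dots> \<le> 1" by (rule rI)
    finally have RE: "ennreal R * emeasure ?M E \<le> 1" .
    have "emeasure ?M E = ennreal (\<rho>/2) * (ennreal R * emeasure ?M E)"
    proof -
      have "ennreal (\<rho>/2) * ennreal R = 1" using \<rho> by (simp add: R_def ennreal_mult[symmetric] del: ennreal_mult)
      then show ?thesis by (simp add: mult.assoc[symmetric])
    qed
    also have "\<dots> \<le> ennreal (\<rho>/2) * 1" using RE by (intro mult_left_mono) auto
    finally have E2: "emeasure ?M E \<le> ennreal (\<rho>/2)" by simp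
    have "emeasure ?M A \<le> emeasure ?M (D j \<union> E)" using AsubDE Dsets Esets by (intro emeasure_mono) auto
    also have "\<dots> \<le> emeasure ?M (D j) + emeasure ?M E" using Dsets Esets by (rule emeasure_subadditive)
    also have "\<dots> \<le> emeasure ?M (D j) + ennreal (\<rho>/2)" using E2 by (rule add_left_mono)
    also have "\<dots> < ennreal (\<rho>/2) + ennreal (\<rho>/2)"
      using j ennreal_add_left_cancel_less[of "ennreal (\<rho>/2)" "emeasure ?M (D j)" "ennreal (\<rho>/2)"]
      by (simp add: add.commute)
    also have "\<dots> = ennreal \<rho>" using \<rho> by (simp add: ennreal_plus[symmetric] del: ennreal_plus)
    finally show "emeasure ?M {x\<in>K. \<delta> < \<bar>h x\<bar>} < ennreal \<rho>" by (simp add: A_def)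
  qed
qed

lemma integrable_K_to_Omega:
  fixes f :: "real^'n \<Rightarrow> 'b::{banach,second_countable_topology}"
  assumes K: "K \<in> sets lebesgue" and \<Omega>: "\<Omega> \<in> sets lebesgue" and KO: "K \<subseteq> \<Omega>"
    and f: "integrable (lebesgue_on K) f"
  shows "integrable (lebesgue_on \<Omega>) (\<lambda>x. indicator K x *\<^sub>R f x)"
proof -
  have "integrable lebesgue (\<lambda>x. indicator K x *\<^sub>R f x)"
    using f K by (simp add: integrable_restrict_space)
  moreover have "(\<lambda>x. indicator \<Omega> x *\<^sub>R (indicator K x *\<^sub>R f x)) = (\<lambda>x. indicator K x *\<^sub>R f x)"
    using KO by (auto simp: indicator_def fun_eq_iff)
  ultimately show ?thesis using \<Omega> by (simp add: integrable_restrict_space)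
qed

lemma CM_scalar:
  assumes wp: "weak_Phi \<Omega> \<phi>" and \<Omega>: "\<Omega> \<in> sets lebesgue" and K: "compact K" "K \<subseteq> \<Omega>"
    and Wm: "W \<in> borel_measurable (lebesgue_on \<Omega>)" and Wnn: "\<And>x. W x \<ge> 0"
    and Wi: "integrable (lebesgue_on \<Omega>) (\<lambda>x. indicator K x * W x)"
    and C: "C \<ge> 0" and \<epsilon>: "\<epsilon> > 0"
  obtains \<eta> where "\<eta> > 0"
    "\<And>a. a \<in> borel_measurable (lebesgue_on \<Omega>) \<Longrightarrow> (\<And>x. 0 \<le> a x) \<Longrightarrow> (\<And>x. a x \<le> C) \<Longrightarrow>
       (\<And>x. x \<notin> K \<Longrightarrow> a x = 0) \<Longrightarrow> lux \<Omega> (conj_Phi \<phi>) a < ennreal \<eta> \<Longrightarrow>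
       integral\<^sup>L (lebesgue_on \<Omega>) (\<lambda>x. a x * W x) \<le> \<epsilon>"
proof -
  let ?M = "lebesgue_on \<Omega>"
  have KM: "K \<in> sets ?M" using K \<Omega> by (simp add: sets_restrict_space_iff compact_imp_closed closed_lebesgue)
  define Wk where "Wk x = indicator K x * W x" for x
  have Wkm: "Wk \<in> borel_measurable ?M" unfolding Wk_def using KM Wm by measurable
  have Wknn: "Wk x \<ge> 0" for x using Wnn by (simp add: Wk_def)
  have Wkeq: "Wk = (\<lambda>x. indicator K x * W x)" by (simp add: fun_eq_iff Wk_def)
  have Wki: "integrable ?M Wk" using Wi unfolding Wkeq .
  define tn where "tn n x = max (Wk x - real n) 0" for n :: nat and x
  have tnm: "tn n \<in> borel_measurable ?M" for n unfolding tn_def using Wkm by measurable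
  have tnnn: "tn n x \<ge> 0" for n x by (simp add: tn_def)
  have tnle: "tn n x \<le> Wk x" for n x using Wknn[of x] by (simp add: tn_def)
  have tni: "integrable ?M (tn n)" for n
    by (rule Bochner_Integration.integrable_bound[OF Wki tnm]) (use tnnn tnle Wknn in auto)
  have "(\<lambda>n. integral\<^sup>L ?M (tn n)) \<longlonglongrightarrow> integral\<^sup>L ?M (\<lambda>x. 0)"
  proof (rule integral_dominated_convergence[where w=Wk])
    show "AE x in ?M. (\<lambda>n. tn n x) \<longlonglongrightarrow> 0"
    proof (rule AE_I2)
      fix x
      obtain n0 :: nat where "Wk x < real n0" using reals_Archimedean2 by blast
      then have "\<forall>\<^sub>F n in sequentially. tn n x = 0"
        unfolding eventually_sequentially tn_def
        by (intro exI[of _ n0]) (auto simp: max_def dest: order.strict_trans2[OF _ of_nat_mono])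
      then show "(\<lambda>n. tn n x) \<longlonglongrightarrow> 0" by (rule tendsto_eventually)
    qed
  qed (use tnm Wki tnnn tnle in auto)
  then have "(\<lambda>n. integral\<^sup>L ?M (tn n)) \<longlonglongrightarrow> 0" by simp
  then have "\<forall>\<^sub>F n in sequentially. integral\<^sup>L ?M (tn n) < \<epsilon> / (3 * (C + 1))"
    by (rule order_tendstoD(2)) (use \<epsilon> C in simp)
  then obtain N where N: "integral\<^sup>L ?M (tn N) < \<epsilon> / (3 * (C + 1))" by (auto simp: eventually_sequentially)
  define I where "I = integral\<^sup>L ?M Wk"
  have I0: "I \<ge> 0" unfolding I_def using Wknn by (simp add: integral_nonneg)
  define \<delta> where "\<delta> = \<epsilon> / (3 * (I + 1))"
  define \<rho> where "\<rho> = \<epsilon> / (3 * (C * real N + 1))"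
  have \<delta>: "\<delta> > 0" using \<epsilon> I0 by (simp add: \<delta>_def)
  have \<rho>: "\<rho> > 0" using \<epsilon> C unfolding \<rho>_def by (intro divide_pos_pos) (auto intro!: add_nonneg_pos)
  obtain \<eta> where \<eta>: "\<eta> > 0" and small: "\<And>h. h \<in> borel_measurable ?M \<Longrightarrow> lux \<Omega> (conj_Phi \<phi>) h < ennreal \<eta> \<Longrightarrow>
        emeasure ?M {x\<in>K. \<delta> < \<bar>h x\<bar>} < ennreal \<rho>"
    using lux_small_measure[OF wp \<Omega> K \<delta> \<rho>] by blast
  show ?thesis
  proof (rule that[OF \<eta>])
    fix a assume am: "a \<in> borel_measurable ?M" and ann: "\<And>x. 0 \<le> a x" and aC: "\<And>x. a x \<le> C"
      and a0: "\<And>x. x \<notin> K \<Longrightarrow> a x = 0" and al: "lux \<Omega> (conj_Phi \<phi>) a < ennreal \<eta>"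
    define A where "A = {x\<in>K. \<delta> < \<bar>a x\<bar>}"
    have Asets: "A \<in> sets ?M"
    proof -
      have "{x \<in> space ?M. \<delta> < \<bar>a x\<bar>} \<in> sets ?M" using am by measurable
      then have "{x \<in> space ?M. \<delta> < \<bar>a x\<bar>} \<inter> K \<in> sets ?M" using KM by blast
      moreover have "{x \<in> space ?M. \<delta> < \<bar>a x\<bar>} \<inter> K = A" using K by (auto simp: A_def)
      ultimately show ?thesis by simp
    qed
    have AO: "A \<inter> \<Omega> = A" using K by (auto simp: A_def)
    have Aem: "emeasure ?M A < ennreal \<rho>" unfolding A_def by (rule small[OF am al])
    then have Afin: "emeasure ?M A < \<infinity>" unfolding infinity_ennreal_def by (rule less_trans[OF _ ennreal_less_top])
    have Ai: "integrable ?M (indicator A :: _ \<Rightarrow> real)"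
      using Asets Afin AO by (simp add: integrable_indicator_iff)
    have Ameas: "measure ?M A \<le> \<rho>"
    proof -
      have "emeasure ?M A = ennreal (measure ?M A)" using Afin by (intro emeasure_eq_ennreal_measure) simp
      then have "ennreal (measure ?M A) < ennreal \<rho>" using Aem by simp
      then show ?thesis using ennreal_less_iff[OF measure_nonneg[of ?M A]] by simp
    qed
    have aW: "a x * W x = a x * Wk x" for x using a0[of x] by (cases "x \<in> K") (auto simp: Wk_def)
    have aWi: "integrable ?M (\<lambda>x. a x * W x)"
      unfolding aW
      by (rule Bochner_Integration.integrable_bound[of _ "\<lambda>x. C * Wk x"])
         (use Wki am Wkm ann aC Wknn C in \<open>auto intro!: AE_I2 mult_right_mono simp: abs_mult\<close>)
    have pw: "a x * W x \<le> \<delta> * Wk x + (C * real N) * indicator A x + C * tn N x" for x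
    proof (cases "x \<in> K")
      case False
      then show ?thesis using a0[of x] Wknn[of x] tnnn[of N x] \<delta> C by (auto simp: A_def)
    next
      case True
      then have WkW: "Wk x = W x" by (simp add: Wk_def)
      show ?thesis
      proof (cases "a x \<le> \<delta>")
        case True
        then have "a x * W x \<le> \<delta> * Wk x" unfolding WkW using Wnn[of x] by (rule mult_right_mono)
        moreover have "0 \<le> (C * real N) * indicator A x + C * tn N x" using C tnnn[of N x] by auto
        ultimately show ?thesis by linarith
      next
        case False
        then have xA: "x \<in> A" using \<open>x \<in> K\<close> ann[of x] by (auto simp: A_def)
        have "a x * W x \<le> C * W x" using aC[of x] Wnn[of x] by (rule mult_right_mono)
        also have "\<dots> \<le> C * (real N + tn N x)" unfolding tn_def WkW using C by (intro mult_left_mono) auto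
        also have "\<dots> = (C * real N) * indicator A x + C * tn N x" using xA by (simp add: algebra_simps)
        moreover have "0 \<le> \<delta> * Wk x" using \<delta> Wknn[of x] by simp
        ultimately show ?thesis by linarith
      qed
    qed
    have "integral\<^sup>L ?M (\<lambda>x. a x * W x) \<le> integral\<^sup>L ?M (\<lambda>x. \<delta> * Wk x + (C * real N) * indicator A x + C * tn N x)"
      by (intro integral_mono aWi pw) (intro Bochner_Integration.integrable_add integrable_mult_right Wki Ai tni)+
    also have "\<dots> = \<delta> * I + (C * real N) * measure ?M A + C * integral\<^sup>L ?M (tn N)"
      using Wki Ai tni Asets AO by (simp add: I_def Bochner_Integration.integral_add integrable_mult_right)
    also have "\<dots> \<le> \<epsilon>/3 + \<epsilon>/3 + \<epsilon>/3"
    proof (intro add_mono)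
      show "\<delta> * I \<le> \<epsilon>/3" using I0 \<epsilon> by (simp add: \<delta>_def field_simps)
      have "(C * real N) * measure ?M A \<le> (C * real N) * \<rho>" using Ameas C by (intro mult_left_mono) auto
      also have "\<dots> \<le> \<epsilon>/3"
      proof -
        have t0: "C * real N \<ge> 0" using C by simp
        have e: "(C * real N) * \<rho> = (\<epsilon>/3) * ((C * real N) / (C * real N + 1))"
          unfolding \<rho>_def using t0 by (simp add: field_simps)
        have "(C * real N) / (C * real N + 1) \<le> 1" using t0 by simp
        then have "(\<epsilon>/3) * ((C * real N) / (C * real N + 1)) \<le> (\<epsilon>/3) * 1" using \<epsilon> by (intro mult_left_mono) auto
        then show ?thesis unfolding e by simp
      qed
      finally show "(C * real N) * measure ?M A \<le> \<epsilon>/3" .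
      have "C * integral\<^sup>L ?M (tn N) \<le> C * (\<epsilon> / (3 * (C + 1)))" using N C by (intro mult_left_mono) auto
      also have "\<dots> \<le> \<epsilon>/3" using C \<epsilon> by (simp add: field_simps)
      finally show "C * integral\<^sup>L ?M (tn N) \<le> \<epsilon>/3" .
    qed
    finally show "integral\<^sup>L ?M (\<lambda>x. a x * W x) \<le> \<epsilon>" by simp
  qed
qed

lemma sigma_deriv:
  assumes k: "k > 0" and t: "t \<ge> 0"
  shows "((\<lambda>t. k / sqrt (k^2 + t)) has_real_derivative (- (k / (2 * sqrt (k^2+t) * (k^2+t))))) (at t)"
proof -
  define S where "S = sqrt (k^2 + t)"
  have pos: "k^2 + t > 0" using k t by (simp add: add_pos_nonneg)
  have S0: "S > 0" unfolding S_def using pos by simp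
  have SS: "S^2 = k^2 + t" unfolding S_def using pos by simp
  have d1: "((\<lambda>t. k^2 + t) has_real_derivative 1) (at t)" by (auto intro!: derivative_eq_intros)
  have d2: "(sqrt has_real_derivative inverse (sqrt (k^2+t)) / 2) (at (k^2+t))" using pos by (rule DERIV_real_sqrt)
  have d3: "((\<lambda>t. sqrt (k^2 + t)) has_real_derivative (inverse S / 2 * 1)) (at t)"
    using DERIV_chain2[OF d2 d1] unfolding S_def .
  have d4: "((\<lambda>t. inverse (sqrt (k^2 + t))) has_real_derivative - ((inverse S / 2 * 1) * inverse (S ^ 2))) (at t)"
    using DERIV_inverse_fun[OF d3] S0 unfolding S_def by simp
  have d5: "((\<lambda>t. k * inverse (sqrt (k^2 + t))) has_real_derivative k * - ((inverse S / 2 * 1) * inverse (S ^ 2))) (at t)"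
    by (rule DERIV_cmult[OF d4])
  have e: "k * - ((inverse S / 2 * 1) * inverse (S ^ 2)) = - (k / (2 * S * (k^2+t)))"
    unfolding SS using S0 pos by (simp add: field_simps)
  have eqf: "(\<lambda>t. k / sqrt (k^2+t)) = (\<lambda>t. k * inverse (sqrt (k^2+t)))" by (simp add: divide_inverse)
  show ?thesis unfolding eqf
    by (rule DERIV_cong[OF d5]) (unfold S_def[symmetric], rule e)
qed

lemma C1_Tk:
  fixes G :: "real^'n \<Rightarrow> 'b::real_inner"
  assumes G: "C1 G" and k: "k > 0"
  shows "C1 (\<lambda>x. Tk k (G x))"
proof -
  have "C1 (\<lambda>x. (\<lambda>t. k / sqrt (k^2 + t)) (G x \<bullet> G x))"
  proof (rule C1_comp_real[where S="{0..}" and a="\<lambda>x. G x \<bullet> G x" and \<sigma>="\<lambda>t. k / sqrt (k^2 + t)" and \<sigma>'="\<lambda>t. - (k / (2 * sqrt (k^2+t) * (k^2+t)))"])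
    show "C1 (\<lambda>x. G x \<bullet> G x)" by (intro C1_inner G)
    show "\<And>x. G x \<bullet> G x \<in> {0..}" by simp
    show "\<And>t. t \<in> {0..} \<Longrightarrow> ((\<lambda>t. k / sqrt (k^2 + t)) has_real_derivative - (k / (2 * sqrt (k^2+t) * (k^2+t)))) (at t)"
      using sigma_deriv[OF k] by simp
    have pos: "\<And>t. t \<in> {0..} \<Longrightarrow> k^2 + t > 0" using k by (simp add: add_pos_nonneg)
    show "continuous_on {0..} (\<lambda>t. - (k / (2 * sqrt (k^2+t) * (k^2+t))))"
      by (intro continuous_intros) (use pos in fastforce)+
  qed
  then have "C1 (\<lambda>x. (k / sqrt (k^2 + G x \<bullet> G x)) *\<^sub>R G x)" using G by (intro C1_scaleR) auto
  then show ?thesis by (simp add: Tk_def)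
qed

lemma C1c_intro:
  assumes "C1 \<Psi>" "compact (closure {x. \<Psi> x \<noteq> 0})" "closure {x. \<Psi> x \<noteq> 0} \<subseteq> \<Omega>"
  shows "\<Psi> \<in> C1c \<Omega>"
  using assms unfolding C1c_def support_in_def Ck1_iff by auto

lemma C1c_C1: "\<Psi> \<in> C1c \<Omega> \<Longrightarrow> C1 \<Psi>"
  unfolding C1c_def Ck1_iff by auto

lemma C1c_supp: "\<Psi> \<in> C1c \<Omega> \<Longrightarrow> compact (closure {x. \<Psi> x \<noteq> 0}) \<and> closure {x. \<Psi> x \<noteq> 0} \<subseteq> \<Omega>"
  unfolding C1c_def support_in_def by auto

lemma conj_zero: "conj_Phi \<phi> x 0 = 0"
  unfolding conj_Phi_def by simp

lemma lux_zero: "lux \<Omega> (conj_Phi \<phi>) (\<lambda>x. 0) \<le> 1"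
proof -
  have "lux \<Omega> (conj_Phi \<phi>) (\<lambda>x. 0) \<le> ennreal 1"
    by (rule lux_le) (simp_all add: conj_zero)
  then show ?thesis by simp
qed

lemma zero_in_Vset:
  fixes \<Omega> :: "(real^'n) set"
  shows "(\<lambda>x::real^'n. 0::real^'n^'n) \<in> {\<psi>. \<psi> \<in> C1c \<Omega> \<and> sym_field \<psi> \<and> mnorm_conj \<Omega> \<phi> \<psi> \<le> 1}"
proof -
  have "(\<lambda>x::real^'n. 0::real^'n^'n) \<in> C1c \<Omega>" by (rule C1c_intro) (auto intro: C1_const)
  moreover have "mnorm_conj \<Omega> \<phi> (\<lambda>x::real^'n. 0::real^'n^'n) \<le> 1"
    unfolding mnorm_conj_def using lux_zero by simp
  ultimately show ?thesis by (simp add: sym_field_def)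
qed

lemma Vtilde_nonneg: "Vtilde \<Omega> \<phi> w \<ge> 0"
proof -
  have "ereal (integral\<^sup>L (lebesgue_on \<Omega>) (\<lambda>x. (\<lambda>x. 0) x \<bar>:\<bar> w x)) \<le> Vtilde \<Omega> \<phi> w"
    unfolding Vtilde_def by (rule SUP_upper[OF zero_in_Vset])
  then show ?thesis by (simp add: frob_def zero_ereal_def)
qed

lemma frob_scaleR: "(c *\<^sub>R A) \<bar>:\<bar> B = c * (A \<bar>:\<bar> B)"
  by (simp add: frob_inner)

lemma stepA:
  assumes Vm: "Vtilde \<Omega> \<phi> w = ereal m" and \<psi>: "\<psi> \<in> C1c \<Omega>" "sym_field \<psi>" and c: "c > 0"
    and mn: "mnorm_conj \<Omega> \<phi> \<psi> \<le> ennreal c"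
  shows "integral\<^sup>L (lebesgue_on \<Omega>) (\<lambda>x. \<psi> x \<bar>:\<bar> w x) \<le> m * c"
proof -
  define \<psi>' where "\<psi>' x = (1/c) *\<^sub>R \<psi> x" for x
  have nz: "{x. \<psi>' x \<noteq> 0} = {x. \<psi> x \<noteq> 0}" using c by (auto simp: \<psi>'_def)
  have C1': "C1 \<psi>'" using C1_scale[OF C1c_C1[OF \<psi>(1)], of "1/c"] by (simp add: \<psi>'_def[abs_def])
  have C: "\<psi>' \<in> C1c \<Omega>"
    by (rule C1c_intro[OF C1']) (use C1c_supp[OF \<psi>(1)] in \<open>simp_all only: nz\<close>)
  have S: "sym_field \<psi>'" using \<psi>(2) by (simp add: sym_field_def \<psi>'_def)
  have "mnorm_conj \<Omega> \<phi> \<psi>' \<le> ennreal (1/c) * mnorm_conj \<Omega> \<phi> \<psi>"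
    unfolding mnorm_conj_def by (rule lux_mono_scale) (use c in \<open>auto simp: \<psi>'_def\<close>)
  also have "\<dots> \<le> ennreal (1/c) * ennreal c" using mn by (intro mult_left_mono) auto
  also have "\<dots> = 1" using c by (simp add: ennreal_mult[symmetric] del: ennreal_mult)
  finally have M: "mnorm_conj \<Omega> \<phi> \<psi>' \<le> 1" .
  have "ereal (integral\<^sup>L (lebesgue_on \<Omega>) (\<lambda>x. \<psi>' x \<bar>:\<bar> w x)) \<le> Vtilde \<Omega> \<phi> w"
    unfolding Vtilde_def by (rule SUP_upper) (use C S M in auto)
  then have "integral\<^sup>L (lebesgue_on \<Omega>) (\<lambda>x. \<psi>' x \<bar>:\<bar> w x) \<le> m" using Vm by simp
  moreover have "integral\<^sup>L (lebesgue_on \<Omega>) (\<lambda>x. \<psi>' x \<bar>:\<bar> w x) = (1/c) * integral\<^sup>L (lebesgue_on \<Omega>) (\<lambda>x. \<psi> x \<bar>:\<bar> w x)"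
    by (simp add: \<psi>'_def frob_scaleR)
  ultimately show ?thesis using c by (simp add: field_simps)
qed

lemma integrable_bounded_K:
  fixes F :: "real^'n \<Rightarrow> real"
  assumes Wi: "integrable M (\<lambda>x. indicator K x * W x)" and Fm: "F \<in> borel_measurable M"
    and le: "\<And>x. \<bar>F x\<bar> \<le> B * (indicator K x * W x)"
  shows "integrable M F"
proof (rule Bochner_Integration.integrable_bound[OF integrable_mult_right[of B, OF Wi] Fm])
  show "AE x in M. norm (F x) \<le> norm (B * (indicator K x * W x))"
    by (rule AE_I2) (use le in \<open>auto intro: order_trans[OF _ abs_ge_self]\<close>)
qed

lemma stepB:
  fixes \<Omega> K :: "(real^'n) set" and w :: "real^'n \<Rightarrow> real^'n^'n" and v :: "real^'n \<Rightarrow> real"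
  assumes \<Omega>o: "open \<Omega>" and wp: "weak_Phi \<Omega> \<phi>"
    and wm: "w \<in> borel_measurable (lebesgue_on \<Omega>)"
    and wloc: "\<And>K. compact K \<Longrightarrow> K \<subseteq> \<Omega> \<Longrightarrow> integrable (lebesgue_on K) w"
    and wsym: "\<And>x i j. x \<in> \<Omega> \<Longrightarrow> w x $ i $ j = w x $ j $ i"
    and dens: "\<forall>f\<in>L_conj \<Omega> \<phi>. \<forall>\<epsilon>>0. \<exists>\<psi>\<in>C1c \<Omega>. mnorm_conj \<Omega> \<phi> (\<lambda>x. f x - \<psi> x) < ennreal \<epsilon>"
    and Vm: "Vtilde \<Omega> \<phi> w = ereal m"
    and vm: "v \<in> borel_measurable (lebesgue_on \<Omega>)" and vl: "lux \<Omega> (conj_Phi \<phi>) v \<le> 1"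
    and K: "compact K" "K \<subseteq> \<Omega>" and k: "k > 0"
  shows "integral\<^sup>L (lebesgue_on \<Omega>) (\<lambda>x. Tk k ((indicator K x * \<bar>v x\<bar> / norm (w x)) *\<^sub>R w x) \<bar>:\<bar> w x) \<le> m"
proof -
  let ?M = "lebesgue_on \<Omega>"
  have \<Omega>L: "\<Omega> \<in> sets lebesgue" using \<Omega>o by (rule open_lebesgue)
  have m0: "m \<ge> 0" using Vtilde_nonneg[of \<Omega> \<phi> w] Vm by simp
  have KM: "K \<in> sets ?M" using K \<Omega>L by (simp add: sets_restrict_space_iff compact_imp_closed closed_lebesgue)
  define f where "f x = (indicator K x * \<bar>v x\<bar> / norm (w x)) *\<^sub>R w x" for x
  define Tf where "Tf x = Tk k (f x)" for x
  note KM[measurable] vm[measurable] wm[measurable]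
  have fm: "f \<in> borel_measurable ?M" unfolding f_def[abs_def] by measurable
  have Tfm: "Tf \<in> borel_measurable ?M" unfolding Tf_def[abs_def] Tk_def using fm by measurable
  have f0: "x \<notin> K \<Longrightarrow> f x = 0" for x by (simp add: f_def)
  have fnorm: "norm (f x) \<le> \<bar>v x\<bar>" for x
  proof (cases "w x = 0")
    case False
    then show ?thesis by (auto simp: f_def indicator_def)
  qed (simp add: f_def)
  have fsym: "f x $ i $ j = f x $ j $ i" for x i j
  proof (cases "x \<in> K")
    case True then show ?thesis using K wsym[of x i j] by (auto simp: f_def)
  qed (simp add: f0)
  have mf: "mnorm_conj \<Omega> \<phi> f \<le> 1"
  proof -
    have "mnorm_conj \<Omega> \<phi> f \<le> ennreal 1 * lux \<Omega> (conj_Phi \<phi>) v"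
      unfolding mnorm_conj_def by (rule lux_mono_scale) (use fnorm in auto)
    also have "\<dots> \<le> 1" using vl by simp
    finally show ?thesis .
  qed
  have "mnorm_conj \<Omega> \<phi> f < top" using mf by (rule le_less_trans) simp
  then have fL: "f \<in> L_conj \<Omega> \<phi>" unfolding L_conj_def using fm by (simp add: infinity_ennreal_def)
  obtain ch :: "real^'n \<Rightarrow> real" where ch: "C1 ch" "\<And>x. 0 \<le> ch x" "\<And>x. ch x \<le> 1" "\<And>x. x \<in> K \<Longrightarrow> ch x = 1"
    "compact (closure {x. ch x \<noteq> 0})" "closure {x. ch x \<noteq> 0} \<subseteq> \<Omega>"
    using cutoff_exists[OF K(1) \<Omega>o K(2)] by blast
  define K' where "K' = closure {x. ch x \<noteq> 0}"
  have K': "compact K'" "K' \<subseteq> \<Omega>" using ch by (auto simp: K'_def)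
  have KK': "K \<subseteq> K'" unfolding K'_def using ch(4) closure_subset by fastforce
  have K'L: "K' \<in> sets lebesgue" using K' by (simp add: compact_imp_closed closed_lebesgue)
  define W where "W x = norm (w x)" for x
  have Wm: "W \<in> borel_measurable ?M" unfolding W_def[abs_def] by measurable
  have Wnn: "W x \<ge> 0" for x by (simp add: W_def)
  have Wi: "integrable ?M (\<lambda>x. indicator K' x * W x)"
    using integrable_K_to_Omega[OF K'L \<Omega>L K'(2) integrable_norm[OF wloc[OF K']]] by (simp add: W_def)
  have main: "integral\<^sup>L ?M (\<lambda>x. Tf x \<bar>:\<bar> w x) \<le> m + e" if e: "e > 0" for e
  proof -
    have C2: "0 \<le> 2*k" using k by simp
    have e2: "0 < e/2" using e by simp
    obtain \<eta> where \<eta>: "\<eta> > 0" and CM: "\<And>a. a \<in> borel_measurable ?M \<Longrightarrow> (\<And>x. 0 \<le> a x) \<Longrightarrow> (\<And>x. a x \<le> 2*k) \<Longrightarrow>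
       (\<And>x. x \<notin> K' \<Longrightarrow> a x = 0) \<Longrightarrow> lux \<Omega> (conj_Phi \<phi>) a < ennreal \<eta> \<Longrightarrow>
       integral\<^sup>L ?M (\<lambda>x. a x * W x) \<le> e/2"
      using CM_scalar[OF wp \<Omega>L K' Wm Wnn Wi C2 e2] by blast
    define \<eta>' where "\<eta>' = min (\<eta>/4) (e / (4 * (m + 1)))"
    have \<eta>': "\<eta>' > 0" "\<eta>' \<le> \<eta>/4" "\<eta>' \<le> e / (4 * (m + 1))"
      unfolding \<eta>'_def using \<eta> e m0 by (auto intro!: divide_pos_pos simp del: divide_le_eq_numeral1 le_divide_eq_numeral1)
    obtain \<psi> where \<psi>: "\<psi> \<in> C1c \<Omega>" "mnorm_conj \<Omega> \<phi> (\<lambda>x. f x - \<psi> x) < ennreal \<eta>'"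
      using dens fL \<eta>'(1) by blast
    define \<Psi> where "\<Psi> x = ch x *\<^sub>R Tk k (msym (\<psi> x))" for x
    have C1\<Psi>: "C1 \<Psi>" unfolding \<Psi>_def[abs_def]
      by (intro C1_scaleR ch(1) C1_Tk k C1_linear[OF msym_linear] C1c_C1[OF \<psi>(1)])
    have sub: "{x. \<Psi> x \<noteq> 0} \<subseteq> {x. ch x \<noteq> 0}" by (auto simp: \<Psi>_def)
    have clsub: "closure {x. \<Psi> x \<noteq> 0} \<subseteq> K'" unfolding K'_def by (rule closure_mono[OF sub])
    have \<Psi>C: "\<Psi> \<in> C1c \<Omega>"
    proof (rule C1c_intro[OF C1\<Psi>])
      show "compact (closure {x. \<Psi> x \<noteq> 0})" unfolding compact_closure
        by (rule bounded_subset[OF compact_imp_bounded[OF K'(1)]]) (use sub closure_subset K'_def in blast)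
      show "closure {x. \<Psi> x \<noteq> 0} \<subseteq> \<Omega>" using clsub K'(2) by blast
    qed
    have \<Psi>S: "sym_field \<Psi>" unfolding sym_field_def \<Psi>_def Tk_def by (simp add: msym_sym)
    define g where "g x = \<Psi> x - Tf x" for x
    have \<Psi>cont: "continuous_on UNIV \<Psi>" by (rule C1_cont[OF C1\<Psi>])
    have \<Psi>m: "\<Psi> \<in> borel_measurable ?M"
      by (rule continuous_imp_measurable_on_sets_lebesgue[OF continuous_on_subset[OF \<Psi>cont] \<Omega>L]) simp
    have gm: "g \<in> borel_measurable ?M" unfolding g_def[abs_def] using \<Psi>m Tfm by measurable
    have Tfnorm: "norm (Tf x) \<le> k" for x unfolding Tf_def by (rule Tk_norm_le[OF k])
    have \<Psi>norm: "norm (\<Psi> x) \<le> k" for x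
    proof -
      have "norm (\<Psi> x) = \<bar>ch x\<bar> * norm (Tk k (msym (\<psi> x)))" by (simp add: \<Psi>_def)
      also have "\<dots> \<le> 1 * k" using ch(2,3)[of x] Tk_norm_le[OF k] by (intro mult_mono) auto
      finally show ?thesis by simp
    qed
    have gC: "norm (g x) \<le> 2 * k" for x
      using norm_triangle_ineq4[of "\<Psi> x" "Tf x"] Tfnorm[of x] \<Psi>norm[of x] by (simp add: g_def)
    have ch0: "x \<notin> K' \<Longrightarrow> ch x = 0" for x
      using closure_subset[of "{x. ch x \<noteq> 0}"] unfolding K'_def by blast
    have g0: "x \<notin> K' \<Longrightarrow> g x = 0" for x
    proof -
      assume x: "x \<notin> K'"
      then have "ch x = 0" by (rule ch0)
      moreover have "x \<notin> K" using x KK' by blast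
      ultimately show "g x = 0" by (simp add: g_def \<Psi>_def Tf_def f0 Tk_def)
    qed
    have \<Psi>0: "x \<notin> K' \<Longrightarrow> \<Psi> x = 0" for x
      using ch0[of x] by (simp add: \<Psi>_def)
    have Tf0: "x \<notin> K' \<Longrightarrow> Tf x = 0" for x
    proof -
      assume "x \<notin> K'"
      then have "x \<notin> K" using KK' by blast
      then show "Tf x = 0" by (simp add: Tf_def f0 Tk_def)
    qed
    have gle: "norm (g x) \<le> 2 * norm (f x - \<psi> x)" for x
    proof (cases "x \<in> K")
      case True
      have fs: "msym (f x) = f x" by (rule msym_id) (rule fsym)
      have "norm (g x) = norm (Tk k (msym (\<psi> x)) - Tk k (f x))" using True ch(4) by (simp add: g_def \<Psi>_def Tf_def)
      also have "\<dots> \<le> 2 * norm (msym (\<psi> x) - f x)" by (rule Tk_lip[OF k])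
      also have "msym (\<psi> x) - f x = msym (\<psi> x - f x)" by (subst fs[symmetric]) (rule msym_minus)
      also have "2 * norm (msym (\<psi> x - f x)) \<le> 2 * norm (\<psi> x - f x)" using norm_msym by simp
      also have "\<dots> = 2 * norm (f x - \<psi> x)" by (simp add: norm_minus_commute)
      finally show ?thesis .
    next
      case False
      have "Tk k (0::real^'n^'n) = 0" by (simp add: Tk_def)
      then have "norm (g x) = \<bar>ch x\<bar> * norm (Tk k (msym (\<psi> x)))" using False by (simp add: g_def \<Psi>_def Tf_def f0)
      also have "\<dots> \<le> 1 * norm (msym (\<psi> x))" using ch(2,3)[of x] Tk_norm_le'[OF k] by (intro mult_mono) auto
      also have "\<dots> \<le> norm (\<psi> x)" using norm_msym by simp
      also have "\<dots> = norm (f x - \<psi> x)" using False by (simp add: f0)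
      finally show ?thesis using norm_ge_zero[of "f x - \<psi> x"] by linarith
    qed
    have mg: "mnorm_conj \<Omega> \<phi> g < ennreal \<eta>"
    proof -
      have "mnorm_conj \<Omega> \<phi> g \<le> ennreal 2 * mnorm_conj \<Omega> \<phi> (\<lambda>x. f x - \<psi> x)"
        unfolding mnorm_conj_def by (rule lux_mono_scale) (use gle in auto)
      also have "\<dots> \<le> ennreal 2 * ennreal \<eta>'" using \<psi>(2) by (intro mult_left_mono) auto
      also have "\<dots> = ennreal (2 * \<eta>')" using \<eta>'(1) by (simp add: ennreal_mult)
      also have "\<dots> < ennreal \<eta>" using \<eta>' \<eta> by (intro ennreal_lessI) auto
      finally show ?thesis .
    qed
    have ngm: "(\<lambda>x. norm (g x)) \<in> borel_measurable ?M" using gm by measurable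
    have CMg: "integral\<^sup>L ?M (\<lambda>x. norm (g x) * W x) \<le> e/2"
      by (rule CM[OF ngm]) (use gC g0 mg in \<open>auto simp: mnorm_conj_def\<close>)
    have gwm: "(\<lambda>x. g x \<bar>:\<bar> w x) \<in> borel_measurable ?M" unfolding frob_inner using gm by measurable
    have gwi: "integrable ?M (\<lambda>x. g x \<bar>:\<bar> w x)"
    proof (rule integrable_bounded_K[OF Wi gwm, of "2*k"])
      fix x
      have "\<bar>g x \<bar>:\<bar> w x\<bar> \<le> norm (g x) * W x" unfolding frob_inner W_def by (rule Cauchy_Schwarz_ineq2)
      also have "\<dots> \<le> 2 * k * (indicator K' x * W x)"
        using gC[of x] g0[of x] Wnn[of x] by (cases "x \<in> K'") (auto intro: mult_right_mono)
      finally show "\<bar>g x \<bar>:\<bar> w x\<bar> \<le> 2 * k * (indicator K' x * W x)" .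
    qed
    have ngwm: "(\<lambda>x. norm (g x) * W x) \<in> borel_measurable ?M" using gm Wm by measurable
    have ngwi: "integrable ?M (\<lambda>x. norm (g x) * W x)"
    proof (rule integrable_bounded_K[OF Wi ngwm, of "2*k"])
      fix x
      show "\<bar>norm (g x) * W x\<bar> \<le> 2 * k * (indicator K' x * W x)"
        using gC[of x] g0[of x] Wnn[of x] by (cases "x \<in> K'") (auto intro: mult_right_mono)
    qed
    have \<Psi>wm: "(\<lambda>x. \<Psi> x \<bar>:\<bar> w x) \<in> borel_measurable ?M" unfolding frob_inner using \<Psi>m by measurable
    have \<Psi>wi: "integrable ?M (\<lambda>x. \<Psi> x \<bar>:\<bar> w x)"
    proof (rule integrable_bounded_K[OF Wi \<Psi>wm, of "k"])
      fix x
      have "\<bar>\<Psi> x \<bar>:\<bar> w x\<bar> \<le> norm (\<Psi> x) * W x" unfolding frob_inner W_def by (rule Cauchy_Schwarz_ineq2)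
      also have "\<dots> \<le> k * (indicator K' x * W x)"
        using \<Psi>norm[of x] \<Psi>0[of x] Wnn[of x] by (cases "x \<in> K'") (auto intro: mult_right_mono)
      finally show "\<bar>\<Psi> x \<bar>:\<bar> w x\<bar> \<le> k * (indicator K' x * W x)" .
    qed
    have gint: "\<bar>integral\<^sup>L ?M (\<lambda>x. g x \<bar>:\<bar> w x)\<bar> \<le> e/2"
    proof -
      have "\<bar>integral\<^sup>L ?M (\<lambda>x. g x \<bar>:\<bar> w x)\<bar> \<le> integral\<^sup>L ?M (\<lambda>x. \<bar>g x \<bar>:\<bar> w x\<bar>)"
        using integral_norm_bound[of ?M "\<lambda>x. g x \<bar>:\<bar> w x"] by simp
      also have "\<dots> \<le> integral\<^sup>L ?M (\<lambda>x. norm (g x) * W x)"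
        using gwi ngwi by (intro integral_mono) (auto simp: frob_inner W_def intro: Cauchy_Schwarz_ineq2)
      also have "\<dots> \<le> e/2" by (rule CMg)
      finally show ?thesis .
    qed
    have nTfm: "(\<lambda>x. norm (Tf x)) \<in> borel_measurable ?M" using Tfm by measurable
    have mTf: "mnorm_conj \<Omega> \<phi> Tf \<le> 1"
    proof -
      have "mnorm_conj \<Omega> \<phi> Tf \<le> ennreal 1 * mnorm_conj \<Omega> \<phi> f"
        unfolding mnorm_conj_def by (rule lux_mono_scale) (use Tk_norm_le'[OF k] in \<open>auto simp: Tf_def\<close>)
      also have "\<dots> \<le> 1" using mf by simp
      finally show ?thesis .
    qed
    have m\<Psi>: "mnorm_conj \<Omega> \<phi> \<Psi> \<le> ennreal (1 + 2*\<eta>')"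
    proof -
      have "mnorm_conj \<Omega> \<phi> \<Psi> \<le> mnorm_conj \<Omega> \<phi> Tf + mnorm_conj \<Omega> \<phi> g"
        unfolding mnorm_conj_def
      proof (rule lux_triangle[OF wp \<Omega>L nTfm ngm])
        fix x show "\<bar>norm (\<Psi> x)\<bar> \<le> \<bar>norm (Tf x)\<bar> + \<bar>norm (g x)\<bar>"
          using norm_triangle_ineq[of "Tf x" "g x"] by (simp add: g_def)
      qed
      also have "\<dots> \<le> 1 + ennreal (2*\<eta>')"
      proof (rule add_mono[OF mTf])
        have "mnorm_conj \<Omega> \<phi> g \<le> ennreal 2 * mnorm_conj \<Omega> \<phi> (\<lambda>x. f x - \<psi> x)"
          unfolding mnorm_conj_def by (rule lux_mono_scale) (use gle in auto)
        also have "\<dots> \<le> ennreal 2 * ennreal \<eta>'" using \<psi>(2) by (intro mult_left_mono) auto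
        also have "\<dots> = ennreal (2 * \<eta>')" using \<eta>'(1) by (simp add: ennreal_mult)
        finally show "mnorm_conj \<Omega> \<phi> g \<le> ennreal (2*\<eta>')" .
      qed
      also have "\<dots> = ennreal (1 + 2*\<eta>')" using \<eta>' by simp
      finally show ?thesis .
    qed
    have A: "integral\<^sup>L ?M (\<lambda>x. \<Psi> x \<bar>:\<bar> w x) \<le> m * (1 + 2*\<eta>')"
      by (rule stepA[OF Vm \<Psi>C \<Psi>S _ m\<Psi>]) (use \<eta>' in simp)
    have eqT: "Tf x \<bar>:\<bar> w x = \<Psi> x \<bar>:\<bar> w x - g x \<bar>:\<bar> w x" for x
      by (simp add: g_def frob_inner inner_diff_left)
    have "integral\<^sup>L ?M (\<lambda>x. Tf x \<bar>:\<bar> w x) = integral\<^sup>L ?M (\<lambda>x. \<Psi> x \<bar>:\<bar> w x) - integral\<^sup>L ?M (\<lambda>x. g x \<bar>:\<bar> w x)"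
      unfolding eqT by (rule Bochner_Integration.integral_diff[OF \<Psi>wi gwi])
    also have "\<dots> \<le> m * (1 + 2*\<eta>') + e/2" using A gint by linarith
    also have "m * (2*\<eta>') \<le> e/2"
    proof -
      have "m * (2*\<eta>') \<le> m * (2 * (e / (4 * (m + 1))))" using \<eta>'(3) m0 by (intro mult_left_mono) auto
      also have "\<dots> = (e/2) * (m / (m+1))" using m0 by (simp add: field_simps)
      also have "\<dots> \<le> (e/2) * 1" using m0 e by (intro mult_left_mono) auto
      finally show ?thesis by simp
    qed
    then have "m * (1 + 2*\<eta>') + e/2 \<le> m + e" by (simp add: algebra_simps)
    finally show ?thesis .
  qed
  have "integral\<^sup>L ?M (\<lambda>x. Tf x \<bar>:\<bar> w x) \<le> m" by (rule field_le_epsilon) (rule main)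
  then show ?thesis by (simp add: Tf_def f_def)
qed

lemma factor_mono:
  fixes a b t :: real
  assumes a: "0 < a" "a \<le> b" and t: "t \<ge> 0"
  shows "a / sqrt (a^2 + t) \<le> b / sqrt (b^2 + t)"
proof (rule power2_le_imp_le)
  have pa: "a^2 + t > 0" and pb: "b^2 + t > 0" using a t by (auto intro: add_pos_nonneg)
  have "a^2 * t \<le> b^2 * t" using a t by (intro mult_right_mono power_mono) auto
  then have "a^2 * (b^2 + t) \<le> b^2 * (a^2 + t)" by (simp add: algebra_simps)
  then have "a^2 / (a^2 + t) \<le> b^2 / (b^2 + t)" using pa pb by (simp add: divide_simps)
  then show "(a / sqrt (a^2 + t))^2 \<le> (b / sqrt (b^2 + t))^2"
    using pa pb by (simp add: power_divide)
  show "0 \<le> b / sqrt (b^2 + t)" using a t by simp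
qed

lemma factor_lim:
  fixes t :: real assumes t: "t \<ge> 0"
  shows "(\<lambda>j. real (Suc j) / sqrt ((real (Suc j))^2 + t)) \<longlonglongrightarrow> 1"
proof -
  have eq: "real (Suc j) / sqrt ((real (Suc j))^2 + t) = 1 / sqrt (1 + t * (inverse (real (Suc j)))^2)" for j
  proof -
    define c where "c = real (Suc j)"
    have c: "c > 0" by (simp add: c_def)
    have "c^2 + t = c^2 * (1 + t * (inverse c)^2)" using c by (simp add: field_simps)
    then have "sqrt (c^2 + t) = c * sqrt (1 + t * (inverse c)^2)"
      using c by (simp add: real_sqrt_mult)
    then show ?thesis unfolding c_def[symmetric] using c by simp
  qed
  have "(\<lambda>j. 1 / sqrt (1 + t * (inverse (real (Suc j)))^2)) \<longlonglongrightarrow> 1 / sqrt (1 + t * 0^2)"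
    by (intro tendsto_intros LIMSEQ_inverse_real_of_nat) simp
  then show ?thesis unfolding eq by simp
qed

lemma hh_eq:
  fixes w :: "real^'n^'n" and kk :: real
  assumes kk: "kk > 0"
  shows "Tk kk ((ind * \<bar>v\<bar> / norm w) *\<^sub>R w) \<bar>:\<bar> w = ind * (kk / sqrt (kk^2 + (ind * v)^2)) * \<bar>v\<bar> * norm w"
proof (cases "w = 0")
  case True then show ?thesis by (simp add: Tk_def frob_inner)
next
  case False
  then have nw: "norm w > 0" by simp
  have ww: "w \<bullet> w = (norm w)^2" by (simp add: power2_norm_eq_inner)
  have ff: "((ind * \<bar>v\<bar> / norm w) *\<^sub>R w) \<bullet> ((ind * \<bar>v\<bar> / norm w) *\<^sub>R w) = (ind * v)^2"
    using nw by (simp add: ww power2_eq_square field_simps)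
  have "Tk kk ((ind * \<bar>v\<bar> / norm w) *\<^sub>R w) \<bar>:\<bar> w
      = (kk / sqrt (kk^2 + (ind * v)^2)) * (ind * \<bar>v\<bar> / norm w) * (w \<bullet> w)"
    unfolding Tk_def frob_inner ff by simp
  also have "\<dots> = ind * (kk / sqrt (kk^2 + (ind * v)^2)) * \<bar>v\<bar> * norm w"
    using nw unfolding ww by (simp add: power2_eq_square field_simps)
  finally show ?thesis .
qed

lemma stepC:
  fixes \<Omega> :: "(real^'n) set" and w :: "real^'n \<Rightarrow> real^'n^'n"
  assumes \<Omega>o: "open \<Omega>" and \<Omega>b: "bounded \<Omega>" and wp: "weak_Phi \<Omega> \<phi>"
    and wm: "w \<in> borel_measurable (lebesgue_on \<Omega>)"
    and wloc: "\<And>K. compact K \<Longrightarrow> K \<subseteq> \<Omega> \<Longrightarrow> integrable (lebesgue_on K) w"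
    and wsym: "\<And>x i j. x \<in> \<Omega> \<Longrightarrow> w x $ i $ j = w x $ j $ i"
    and dens: "\<forall>f\<in>L_conj \<Omega> \<phi>. \<forall>\<epsilon>>0. \<exists>\<psi>\<in>C1c \<Omega>. mnorm_conj \<Omega> \<phi> (\<lambda>x. f x - \<psi> x) < ennreal \<epsilon>"
    and Vm: "Vtilde \<Omega> \<phi> w = ereal m"
  shows "assoc_norm \<Omega> \<phi> w \<le> ennreal m"
  unfolding assoc_norm_def
proof (rule SUP_least)
  fix v assume v: "v \<in> {v \<in> borel_measurable (lebesgue_on \<Omega>). lux \<Omega> (conj_Phi \<phi>) v \<le> 1}"
  then have vm: "v \<in> borel_measurable (lebesgue_on \<Omega>)" and vl: "lux \<Omega> (conj_Phi \<phi>) v \<le> 1" by auto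
  let ?M = "lebesgue_on \<Omega>"
  have \<Omega>L: "\<Omega> \<in> sets lebesgue" using \<Omega>o by (rule open_lebesgue)
  define Kj where "Kj j = {x. 1 / real (Suc j) \<le> infdist x (- \<Omega>)} \<inter> cball 0 (real j)" for j
  define kk where "kk j = real (Suc j)" for j
  define hh where "hh j x = indicator (Kj j) x * (kk j / sqrt ((kk j)^2 + (v x)^2)) * \<bar>v x\<bar> * norm (w x)" for j x
  have nonempty: "- \<Omega> \<noteq> {}"
  proof
    assume "- \<Omega> = {}"
    then have "\<Omega> = UNIV" by auto
    then show False using \<Omega>b not_bounded_UNIV by simp
  qed
  have Kjc: "compact (Kj j)" for j
    unfolding Kj_def
    by (intro closed_Int_compact closed_Collect_le continuous_on_infdist continuous_intros compact_cball)
  have KjO: "Kj j \<subseteq> \<Omega>" for j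
  proof
    fix x assume x: "x \<in> Kj j"
    show "x \<in> \<Omega>"
    proof (rule ccontr)
      assume "x \<notin> \<Omega>"
      then have "infdist x (- \<Omega>) = 0" by (intro infdist_zero) simp
      moreover have "1 / real (Suc j) > 0" by simp
      ultimately show False using x by (auto simp: Kj_def)
    qed
  qed
  have Kjmono: "Kj j \<subseteq> Kj (Suc j)" for j
  proof
    fix x assume "x \<in> Kj j"
    moreover have "1 / real (Suc (Suc j)) \<le> 1 / real (Suc j)" by (simp add: frac_le)
    ultimately show "x \<in> Kj (Suc j)" by (auto simp: Kj_def)
  qed
  have kk: "kk j > 0" for j by (simp add: kk_def)
  have hheq: "Tk (kk j) ((indicator (Kj j) x * \<bar>v x\<bar> / norm (w x)) *\<^sub>R w x) \<bar>:\<bar> w x = hh j x" for j x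
  proof -
    have "Tk (kk j) ((indicator (Kj j) x * \<bar>v x\<bar> / norm (w x)) *\<^sub>R w x) \<bar>:\<bar> w x =
          indicator (Kj j) x * (kk j / sqrt ((kk j)^2 + (indicator (Kj j) x * v x)^2)) * \<bar>v x\<bar> * norm (w x)"
      by (rule hh_eq[OF kk])
    also have "\<dots> = hh j x" by (cases "x \<in> Kj j") (simp_all add: hh_def)
    finally show ?thesis .
  qed
  have hhle: "integral\<^sup>L ?M (hh j) \<le> m" for j
    using stepB[OF \<Omega>o wp wm wloc wsym dens Vm vm vl Kjc[of j] KjO[of j] kk[of j]] unfolding hheq by simp
  note vm[measurable] wm[measurable]
  have KjM: "Kj j \<in> sets ?M" for j using Kjc KjO \<Omega>L
    by (simp add: sets_restrict_space_iff compact_imp_closed closed_lebesgue)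
  have hhm: "hh j \<in> borel_measurable ?M" for j
    unfolding hh_def[abs_def] using KjM[of j] by measurable
  have hhnn: "hh j x \<ge> 0" for j x using kk[of j] by (simp add: hh_def)
  have hhi: "integrable ?M (hh j)" for j
  proof -
    have Wi: "integrable ?M (\<lambda>x. indicator (Kj j) x * norm (w x))"
      using integrable_K_to_Omega[OF closed_lebesgue[OF compact_imp_closed[OF Kjc]] \<Omega>L KjO integrable_norm[OF wloc[OF Kjc KjO]]]
      by simp
    show ?thesis
    proof (rule integrable_bounded_K[OF Wi hhm[of j], of "kk j"])
      fix x
      have vs: "\<bar>v x\<bar> \<le> sqrt ((kk j)^2 + (v x)^2)" by (intro real_le_rsqrt) auto
      have sp: "sqrt ((kk j)^2 + (v x)^2) > 0" using kk[of j] by (intro real_sqrt_gt_zero) (simp add: add_pos_nonneg)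
      have "(kk j / sqrt ((kk j)^2 + (v x)^2)) * \<bar>v x\<bar> = kk j * (\<bar>v x\<bar> / sqrt ((kk j)^2 + (v x)^2))" by simp
      also have "\<dots> \<le> kk j * 1" using vs sp kk[of j] by (intro mult_left_mono) auto
      finally have "(kk j / sqrt ((kk j)^2 + (v x)^2)) * \<bar>v x\<bar> \<le> kk j" by simp
      then have q: "(kk j / sqrt ((kk j)^2 + (v x)^2)) * \<bar>v x\<bar> * norm (w x) \<le> kk j * norm (w x)"
        by (intro mult_right_mono) auto
      have "\<bar>hh j x\<bar> = hh j x" using hhnn[of j x] by simp
      also have "\<dots> = indicator (Kj j) x * ((kk j / sqrt ((kk j)^2 + (v x)^2)) * \<bar>v x\<bar> * norm (w x))"
        by (simp add: hh_def mult.assoc)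
      also have "\<dots> \<le> indicator (Kj j) x * (kk j * norm (w x))"
        using q by (intro mult_left_mono) auto
      finally show "\<bar>hh j x\<bar> \<le> kk j * (indicator (Kj j) x * norm (w x))" by (simp add: mult_ac)
    qed
  qed
  have nnle: "(\<integral>\<^sup>+x. ennreal (hh j x) \<partial>?M) \<le> ennreal m" for j
  proof -
    have "(\<integral>\<^sup>+x. ennreal (hh j x) \<partial>?M) = ennreal (integral\<^sup>L ?M (hh j))"
      using hhi hhnn by (intro nn_integral_eq_integral) auto
    also have "\<dots> \<le> ennreal m" using hhle by (intro ennreal_leI)
    finally show ?thesis .
  qed
  have inc: "incseq (\<lambda>j x. ennreal (hh j x))"
  proof (rule incseq_SucI, rule le_funI)
    fix j x
    have f: "kk j / sqrt ((kk j)^2 + (v x)^2) \<le> kk (Suc j) / sqrt ((kk (Suc j))^2 + (v x)^2)"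
      using kk[of j] by (intro factor_mono) (auto simp: kk_def)
    have i: "indicator (Kj j) x \<le> (indicator (Kj (Suc j)) x :: real)"
      using Kjmono[of j] by (auto simp: indicator_def)
    have "hh j x \<le> hh (Suc j) x"
      unfolding hh_def using f i kk[of j] kk[of "Suc j"]
      by (intro mult_right_mono mult_mono) auto
    then show "ennreal (hh j x) \<le> ennreal (hh (Suc j) x)" by (rule ennreal_leI)
  qed
  have lim: "(\<lambda>j. hh j x) \<longlonglongrightarrow> \<bar>v x\<bar> * norm (w x)" if x: "x \<in> \<Omega>" for x
  proof -
    have d: "infdist x (- \<Omega>) > 0"
      using x nonempty \<Omega>o by (intro infdist_pos_not_in_closed) auto
    obtain N1 :: nat where N1: "1 / infdist x (- \<Omega>) < real N1" using reals_Archimedean2 by blast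
    obtain N2 :: nat where N2: "norm x < real N2" using reals_Archimedean2 by blast
    have ev: "\<forall>\<^sub>F j in sequentially. x \<in> Kj j"
      unfolding eventually_sequentially
    proof (intro exI[of _ "max N1 N2"] allI impI)
      fix j assume j: "max N1 N2 \<le> j"
      have "1 / infdist x (- \<Omega>) < real (Suc j)" using N1 j by linarith
      then have "1 / real (Suc j) \<le> infdist x (- \<Omega>)" using d by (simp add: field_simps)
      moreover have "norm x \<le> real j" using N2 j by linarith
      ultimately show "x \<in> Kj j" by (simp add: Kj_def)
    qed
    have "(\<lambda>j. (kk j / sqrt ((kk j)^2 + (v x)^2)) * (\<bar>v x\<bar> * norm (w x))) \<longlonglongrightarrow> 1 * (\<bar>v x\<bar> * norm (w x))"
      by (intro tendsto_mult tendsto_const) (unfold kk_def, rule factor_lim, simp)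
    moreover have "\<forall>\<^sub>F j in sequentially. (kk j / sqrt ((kk j)^2 + (v x)^2)) * (\<bar>v x\<bar> * norm (w x)) = hh j x"
      using ev by eventually_elim (simp add: hh_def)
    ultimately show ?thesis by (simp add: Lim_transform_eventually)
  qed
  have "(\<integral>\<^sup>+x\<in>\<Omega>. ennreal (norm (w x) * \<bar>v x\<bar>) \<partial>lebesgue) = (\<integral>\<^sup>+x. ennreal (norm (w x) * \<bar>v x\<bar>) \<partial>?M)"
    by (rule set_nn_integral_lebesgue_on[OF \<Omega>L])
  also have "\<dots> \<le> (\<integral>\<^sup>+x. (SUP j. ennreal (hh j x)) \<partial>?M)"
  proof (rule nn_integral_mono)
    fix x assume "x \<in> space ?M"
    then have x: "x \<in> \<Omega>" by simp
    have "(\<lambda>j. ennreal (hh j x)) \<longlonglongrightarrow> ennreal (\<bar>v x\<bar> * norm (w x))"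
      by (rule tendsto_ennrealI[OF lim[OF x]])
    moreover have "(\<lambda>j. ennreal (hh j x)) \<longlonglongrightarrow> (SUP j. ennreal (hh j x))"
      by (rule LIMSEQ_SUP) (use inc in \<open>auto simp: incseq_def le_fun_def\<close>)
    ultimately have "ennreal (\<bar>v x\<bar> * norm (w x)) = (SUP j. ennreal (hh j x))" by (rule LIMSEQ_unique)
    then show "ennreal (norm (w x) * \<bar>v x\<bar>) \<le> (SUP j. ennreal (hh j x))" by (simp add: mult.commute)
  qed
  also have "\<dots> = (SUP j. (\<integral>\<^sup>+x. ennreal (hh j x) \<partial>?M))"
    by (rule nn_integral_monotone_convergence_SUP[OF inc]) (use hhm in measurable)
  also have "\<dots> \<le> ennreal m" by (rule SUP_least) (rule nnle)
  finally show "(\<integral>\<^sup>+x\<in>\<Omega>. ennreal (norm (w x) * \<bar>v x\<bar>) \<partial>lebesgue) \<le> ennreal m" .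
qed

theorem lemma3p13:
  fixes \<Omega> :: "(real^'n) set" and \<phi> :: "real^'n \<Rightarrow> real \<Rightarrow> ennreal"
    and u :: "real^'n \<Rightarrow> real^'n" and w :: "real^'n \<Rightarrow> real^'n^'n"
  assumes "open \<Omega>" and "bounded \<Omega>" and "connected \<Omega>"
    and "weak_Phi \<Omega> \<phi>"
    and "u \<in> LD_loc \<Omega>"
    and "sym_grad_density \<Omega> u w"
  shows "Vtilde \<Omega> \<phi> w \<le> enn2ereal (assoc_norm \<Omega> \<phi> w) \<and>
         ((\<forall>f\<in>L_conj \<Omega> \<phi>. \<forall>\<epsilon>>0. \<exists>\<psi>\<in>C1c \<Omega>. mnorm_conj \<Omega> \<phi> (\<lambda>x. f x - \<psi> x) < ennreal \<epsilon>)
         \<longrightarrow> Vtilde \<Omega> \<phi> w = enn2ereal (assoc_norm \<Omega> \<phi> w))"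
proof -
  have \<Omega>o: "open \<Omega>" and \<Omega>b: "bounded \<Omega>" and wp: "weak_Phi \<Omega> \<phi>" using assms by auto
  have sgd: "sym_grad_density \<Omega> u w" using assms by auto
  then have li: "loc_integrable \<Omega> w" and wsym: "\<And>x i j. x \<in> \<Omega> \<Longrightarrow> w x $ i $ j = w x $ j $ i"
    unfolding sym_grad_density_def by auto
  from li have wm: "w \<in> borel_measurable (lebesgue_on \<Omega>)"
    and wloc: "\<And>K. compact K \<Longrightarrow> K \<subseteq> \<Omega> \<Longrightarrow> integrable (lebesgue_on K) w"
    unfolding loc_integrable_def by auto
  have P1: "Vtilde \<Omega> \<phi> w \<le> enn2ereal (assoc_norm \<Omega> \<phi> w)" by (rule part1[OF \<Omega>o])
  moreover have "Vtilde \<Omega> \<phi> w = enn2ereal (assoc_norm \<Omega> \<phi> w)"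
    if dens: "\<forall>f\<in>L_conj \<Omega> \<phi>. \<forall>\<epsilon>>0. \<exists>\<psi>\<in>C1c \<Omega>. mnorm_conj \<Omega> \<phi> (\<lambda>x. f x - \<psi> x) < ennreal \<epsilon>"
  proof (rule antisym[OF P1])
    show "enn2ereal (assoc_norm \<Omega> \<phi> w) \<le> Vtilde \<Omega> \<phi> w"
    proof (cases "Vtilde \<Omega> \<phi> w")
      case (real m)
      have m0: "m \<ge> 0" using Vtilde_nonneg[of \<Omega> \<phi> w] real by simp
      have "assoc_norm \<Omega> \<phi> w \<le> ennreal m"
        by (rule stepC[OF \<Omega>o \<Omega>b wp wm wloc wsym dens real])
      then have "enn2ereal (assoc_norm \<Omega> \<phi> w) \<le> enn2ereal (ennreal m)"
        by (simp add: less_eq_ennreal.rep_eq)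
      also have "\<dots> = ereal m" using m0 by (simp add: enn2ereal_ennreal)
      finally show ?thesis using real by simp
    next
      case PInf then show ?thesis by simp
    next
      case MInf then show ?thesis using Vtilde_nonneg[of \<Omega> \<phi> w] by simp
    qed
  qed
  ultimately show ?thesis by blast
qed

end
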